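(* Let $\gamma\in\{0\}\cup(0,\infty)\cup\{\infty\}$. The following three problems are equivalent (in particular, their optimal values coincide): 1) The max-flow problem $\sup\ \sum_{x\in V}p_s(x)+\sum_{i=1}^n(\rho_i^1S_i^\ell-\rho_i^2S_i^u)$ over $p_s,p_i:V\to\mathbb{R}$, $q_i:V\times V\to\mathbb{R}$, $\rho_i^1,\rho_i^2$, subject to, for all $i\in I$: $|q_i(x,y)|\le1$ for all $(x,y)$ with $\{x,y\}\in E$; $p_i(x)\le C_i(x)$ for all $x$; $(\mathrm{div}_wq_i)(x)-p_s(x)+p_i(x)=\rho_i^1-\rho_i^2$ for all $x$; $0\le\rho_i^1,\rho_i^2\le\gamma$. 2) The primal-dual problem $$\min_{u:V\to\mathbb{R}^n}\ \sup_{p_s,p,q,\rho^1,\rho^2}\ \sum_{x\in V}p_s(x)+\sum_{i=1}^n(\rho_i^1S_i^\ell-\rho_i^2S_i^u)+\sum_{i=1}^n\sum_{x\in V}u_i(x)\big((\mathrm{div}_wq_i)(x)-p_s(x)+p_i(x)+\rho_i^2-\rho_i^1\big),$$ where the supremum is subject to $|q_i(x,y)|\le1$ for $\{x,y\}\in E$, $p_i(x)\le C_i(x)$ for all $x$, and $0\le\rho_i^1,\rho_i^2\le\gamma$, and $u$ is unconstrained. 3) The convex relaxed problem $\min_{u\in\mathcal{B}'}\sum_{i=1}^n\sum_{x\in V}C_i(x)u_i(x)+\sum_{i=1}^nTV_w(u_i)$ subject to the size constraints $S_i^\ell\le\|u_i\|\le S_i^u$ for all $i$ if $\gamma=\infty$,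 with the size penalty $\sum_{i=1}^nP_\gamma(\|u_i\|)$ added to the energy if $0<\gamma<\infty$, and with no size constraints if $\gamma=0$.
   Context: Let $G=(V,E)$ be a finite undirected graph with symmetric weights $w(x,y)=w(y,x)>0$ for $\{x,y\}\in E$ and $w(x,y)=0$ otherwise. $TV_w(v)=\frac12\sum_{x,y\in V}w(x,y)|v(y)-v(x)|$ for $v:V\to\mathbb{R}$. For $\phi:V\times V\to\mathbb{R}$, $(\mathrm{div}_w\phi)(x)=\frac12\sum_{y\in V}w(x,y)(\phi(x,y)-\phi(y,x))$. Let $n\ge2$, $I=\{1,\dots,n\}$, $C_i:V\to\mathbb{R}$ given; $\|u_i\|=\sum_xu_i(x)$; $\mathcal{B}'=\{u:V\to[0,1]^n:\sum_iu_i(x)=1\ \forall x\}$. Size bounds are integers $0\le S_i^\ell\le S_i^u$ with $\sum_iS_i^\ell\le|V|\le\sum_iS_i^u$; for $0<\gamma<\infty$, $P_\gamma(t)=0$ if $S_i^\ell\le t\le S_i^u$, $\gamma(t-S_i^u)$ if $t>S_i^u$, $\gamma(S_i^\ell-t)$ if $t<S_i^\ell$. For $\gamma=\infty$, $[0,\gamma]$ means $[0,\infty)$. *)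

theory Defs
  imports "HOL-Analysis.Analysis"
begin

text \<open>Weighted graph on a finite vertex set V with weights w; edges are the pairs with w x y > 0.
  Labels are indexed by I = {1..n}; functions on V are functions on the vertex type whose
  values outside V are irrelevant.\<close>

definition TV_w :: "'v set \<Rightarrow> ('v \<Rightarrow> 'v \<Rightarrow> real) \<Rightarrow> ('v \<Rightarrow> real) \<Rightarrow> real" where
  "TV_w V w v = (1/2) * (\<Sum>x\<in>V. \<Sum>y\<in>V. w x y * \<bar>v y - v x\<bar>)"

definition div_w :: "'v set \<Rightarrow> ('v \<Rightarrow> 'v \<Rightarrow> real) \<Rightarrow> ('v \<Rightarrow> 'v \<Rightarrow> real) \<Rightarrow> 'v \<Rightarrow> real" where
  "div_w V w \<phi> x = (1/2) * (\<Sum>y\<in>V. w x y * (\<phi> x y - \<phi> y x))"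

definition unorm :: "'v set \<Rightarrow> ('v \<Rightarrow> real) \<Rightarrow> real" where
  "unorm V f = (\<Sum>x\<in>V. f x)"

definition Bprime :: "'v set \<Rightarrow> nat \<Rightarrow> (nat \<Rightarrow> 'v \<Rightarrow> real) set" where
  "Bprime V n = {u. (\<forall>x\<in>V. (\<forall>i\<in>{1..n}. 0 \<le> u i x \<and> u i x \<le> 1) \<and> (\<Sum>i\<in>{1..n}. u i x) = 1)}"

definition P_pen :: "real \<Rightarrow> (nat \<Rightarrow> nat) \<Rightarrow> (nat \<Rightarrow> nat) \<Rightarrow> nat \<Rightarrow> real \<Rightarrow> real" where
  "P_pen g Sl Su i t =
     (if real (Sl i) \<le> t \<and> t \<le> real (Su i) then 0
      else if t > real (Su i) then g * (t - real (Su i))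
      else g * (real (Sl i) - t))"

definition dual_box ::
  "'v set \<Rightarrow> ('v \<Rightarrow> 'v \<Rightarrow> real) \<Rightarrow> nat \<Rightarrow> (nat \<Rightarrow> 'v \<Rightarrow> real) \<Rightarrow> ereal \<Rightarrow>
   (nat \<Rightarrow> 'v \<Rightarrow> real) \<Rightarrow> (nat \<Rightarrow> 'v \<Rightarrow> 'v \<Rightarrow> real) \<Rightarrow> (nat \<Rightarrow> real) \<Rightarrow> (nat \<Rightarrow> real) \<Rightarrow> bool" where
  "dual_box V w n C \<gamma> p q r1 r2 \<longleftrightarrow>
     (\<forall>i\<in>{1..n}.
        (\<forall>x\<in>V. \<forall>y\<in>V. w x y > 0 \<longrightarrow> \<bar>q i x y\<bar> \<le> 1) \<and>
        (\<forall>x\<in>V. p i x \<le> C i x) \<and>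
        0 \<le> r1 i \<and> ereal (r1 i) \<le> \<gamma> \<and> 0 \<le> r2 i \<and> ereal (r2 i) \<le> \<gamma>)"

definition flow_obj :: "'v set \<Rightarrow> nat \<Rightarrow> (nat \<Rightarrow> nat) \<Rightarrow> (nat \<Rightarrow> nat) \<Rightarrow>
   ('v \<Rightarrow> real) \<Rightarrow> (nat \<Rightarrow> real) \<Rightarrow> (nat \<Rightarrow> real) \<Rightarrow> real" where
  "flow_obj V n Sl Su ps r1 r2 =
     (\<Sum>x\<in>V. ps x) + (\<Sum>i\<in>{1..n}. r1 i * real (Sl i) - r2 i * real (Su i))"

definition maxflow_value ::
  "'v set \<Rightarrow> ('v \<Rightarrow> 'v \<Rightarrow> real) \<Rightarrow> nat \<Rightarrow> (nat \<Rightarrow> 'v \<Rightarrow> real) \<Rightarrow> (nat \<Rightarrow> nat) \<Rightarrow> (nat \<Rightarrow> nat)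
   \<Rightarrow> ereal \<Rightarrow> ereal" where
  "maxflow_value V w n C Sl Su \<gamma> =
     Sup {ereal (flow_obj V n Sl Su ps r1 r2) | ps p q r1 r2.
            dual_box V w n C \<gamma> p q r1 r2 \<and>
            (\<forall>i\<in>{1..n}. \<forall>x\<in>V. div_w V w (q i) x - ps x + p i x = r1 i - r2 i)}"

definition pd_inner ::
  "'v set \<Rightarrow> ('v \<Rightarrow> 'v \<Rightarrow> real) \<Rightarrow> nat \<Rightarrow> (nat \<Rightarrow> 'v \<Rightarrow> real) \<Rightarrow> (nat \<Rightarrow> nat) \<Rightarrow> (nat \<Rightarrow> nat)
   \<Rightarrow> ereal \<Rightarrow> (nat \<Rightarrow> 'v \<Rightarrow> real) \<Rightarrow> ereal" where
  "pd_inner V w n C Sl Su \<gamma> u =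
     Sup {ereal (flow_obj V n Sl Su ps r1 r2 +
                 (\<Sum>i\<in>{1..n}. \<Sum>x\<in>V. u i x * (div_w V w (q i) x - ps x + p i x + r2 i - r1 i)))
          | ps p q r1 r2. dual_box V w n C \<gamma> p q r1 r2}"

definition pd_value ::
  "'v set \<Rightarrow> ('v \<Rightarrow> 'v \<Rightarrow> real) \<Rightarrow> nat \<Rightarrow> (nat \<Rightarrow> 'v \<Rightarrow> real) \<Rightarrow> (nat \<Rightarrow> nat) \<Rightarrow> (nat \<Rightarrow> nat)
   \<Rightarrow> ereal \<Rightarrow> ereal" where
  "pd_value V w n C Sl Su \<gamma> = (INF u. pd_inner V w n C Sl Su \<gamma> u)"

definition relax_energy ::
  "'v set \<Rightarrow> ('v \<Rightarrow> 'v \<Rightarrow> real) \<Rightarrow> nat \<Rightarrow> (nat \<Rightarrow> 'v \<Rightarrow> real) \<Rightarrow> (nat \<Rightarrow> nat) \<Rightarrow> (nat \<Rightarrow> nat)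
   \<Rightarrow> ereal \<Rightarrow> (nat \<Rightarrow> 'v \<Rightarrow> real) \<Rightarrow> real" where
  "relax_energy V w n C Sl Su \<gamma> u =
     (\<Sum>i\<in>{1..n}. \<Sum>x\<in>V. C i x * u i x) + (\<Sum>i\<in>{1..n}. TV_w V w (u i)) +
     (if 0 < \<gamma> \<and> \<gamma> < \<infinity> then (\<Sum>i\<in>{1..n}. P_pen (real_of_ereal \<gamma>) Sl Su i (unorm V (u i))) else 0)"

definition relax_feasible ::
  "'v set \<Rightarrow> nat \<Rightarrow> (nat \<Rightarrow> nat) \<Rightarrow> (nat \<Rightarrow> nat) \<Rightarrow> ereal \<Rightarrow> (nat \<Rightarrow> 'v \<Rightarrow> real) set" where
  "relax_feasible V n Sl Su \<gamma> =
     {u \<in> Bprime V n. \<gamma> = \<infinity> \<longrightarrow>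
        (\<forall>i\<in>{1..n}. real (Sl i) \<le> unorm V (u i) \<and> unorm V (u i) \<le> real (Su i))}"

definition relax_value ::
  "'v set \<Rightarrow> ('v \<Rightarrow> 'v \<Rightarrow> real) \<Rightarrow> nat \<Rightarrow> (nat \<Rightarrow> 'v \<Rightarrow> real) \<Rightarrow> (nat \<Rightarrow> nat) \<Rightarrow> (nat \<Rightarrow> nat)
   \<Rightarrow> ereal \<Rightarrow> ereal" where
  "relax_value V w n C Sl Su \<gamma> =
     (INF u\<in>relax_feasible V n Sl Su \<gamma>. ereal (relax_energy V w n C Sl Su \<gamma> u))"

end

theory Submission
  imports Defs
begin


lemma farkas_nat:
  fixes a :: "nat \<Rightarrow> 'x \<Rightarrow> real" and b :: "nat \<Rightarrow> real"
  assumes "finite X" "finite K"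
    and "\<not> (\<exists>z. \<forall>k\<in>K. (\<Sum>t\<in>X. a k t * z t) \<le> b k)"
  shows "\<exists>l. (\<forall>k\<in>K. 0 \<le> l k) \<and> (\<forall>t\<in>X. (\<Sum>k\<in>K. l k * a k t) = 0) \<and> (\<Sum>k\<in>K. l k * b k) < 0"
  using assms
proof (induction X arbitrary: K a b rule: finite_induct)
  case empty
  then obtain k where k: "k \<in> K" "b k < 0" by (force simp: not_le)
  define l where "l j = (if j = k then 1 else 0::real)" for j
  have "(\<Sum>j\<in>K. l j * b j) = b k" proof -
    have "(\<Sum>j\<in>K. l j * b j) = (\<Sum>j\<in>K. if j = k then b j else 0)" by (rule sum.cong) (auto simp: l_def)
    then show ?thesis using k empty.prems(1) by simp
  qed
  then show ?case using k by (intro exI[of _ l]) (auto simp: l_def)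
next
  case (insert s X)
  define K0 where "K0 = {k\<in>K. a k s = 0}"
  define Kp where "Kp = {k\<in>K. a k s > 0}"
  define Km where "Km = {k\<in>K. a k s < 0}"
  define enc where "enc p m = 2 * prod_encode (p,m) + 1" for p m
  define T where "T c j = (if even j then c (j div 2) else (case prod_decode (j div 2) of (p,m) \<Rightarrow> (- a m s) * c p + a p s * c m))" for c :: "nat \<Rightarrow> real" and j
  define K' where "K' = (\<lambda>k. 2*k) ` K0 \<union> (\<lambda>x. enc (fst x) (snd x)) ` (Kp \<times> Km)"
  define a' where "a' j t = T (\<lambda>k. a k t) j" for j t
  define b' where "b' = T b"
  have T1: "T c (2*k) = c k" for c k by (simp add: T_def)
  have T2: "T c (enc p m) = (- a m s) * c p + a p s * c m" for c p m
    by (simp add: T_def enc_def)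
  have fin: "finite K0" "finite Kp" "finite Km" using insert.prems(1) by (auto simp: K0_def Kp_def Km_def)
  have finK': "finite K'" using fin by (simp add: K'_def)
  have infeas: "\<not> (\<exists>z. \<forall>j\<in>K'. (\<Sum>t\<in>X. a' j t * z t) \<le> b' j)"
  proof
    assume "\<exists>z. \<forall>j\<in>K'. (\<Sum>t\<in>X. a' j t * z t) \<le> b' j"
    then obtain z where z: "\<forall>j\<in>K'. (\<Sum>t\<in>X. a' j t * z t) \<le> b' j" by blast
    define R where "R k = (\<Sum>t\<in>X. a k t * z t)" for k
    have RK0: "R k \<le> b k" if "k \<in> K0" for k
      using z[rule_format, of "2*k"] that by (auto simp: K'_def a'_def b'_def T1 R_def)
    have pair: "(- a m s) * R p + a p s * R m \<le> (- a m s) * b p + a p s * b m" if "p \<in> Kp" "m \<in> Km" for p m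
    proof -
      have "enc p m \<in> K'" using that by (force simp: K'_def)
      then have "(\<Sum>t\<in>X. a' (enc p m) t * z t) \<le> b' (enc p m)" using z by blast
      moreover have "(\<Sum>t\<in>X. a' (enc p m) t * z t) = (\<Sum>t\<in>X. (- a m s) * (a p t * z t) + a p s * (a m t * z t))"
        by (simp add: a'_def T2 algebra_simps)
      moreover have "\<dots> = (- a m s) * R p + a p s * R m"
        by (simp only: R_def sum.distrib sum_distrib_left)
      ultimately show ?thesis by (simp add: b'_def T2)
    qed
    define L where "L m = (b m - R m) / a m s" for m
    define U where "U p = (b p - R p) / a p s" for p
    have LU: "L m \<le> U p" if "p \<in> Kp" "m \<in> Km" for p m
    proof -
      have ap: "a p s > 0" and am: "a m s < 0" using that by (auto simp: Kp_def Km_def)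
      have "a p s * (R m - b m) \<le> (- a m s) * (b p - R p)" using pair[OF that] by (simp add: algebra_simps)
      then have "(R m - b m) / (- a m s) \<le> (b p - R p) / a p s"
        using ap am by (simp add: divide_simps mult.commute)
      then show ?thesis unfolding L_def U_def using am
        by (metis minus_diff_eq divide_minus_right minus_divide_left)
    qed
    define v where "v = (if Km = {} then (if Kp = {} then 0 else Min (U ` Kp)) else Max (L ` Km))"
    have vU: "v \<le> U p" if "p \<in> Kp" for p
    proof (cases "Km = {}")
      case True then show ?thesis using that fin by (auto simp: v_def)
    next
      case False
      then have "Max (L ` Km) \<in> L ` Km" using fin by (intro Max_in) auto
      then obtain m where "m \<in> Km" "Max (L ` Km) = L m" by auto
      then show ?thesis using False LU[OF that] by (simp add: v_def)
    qed
    have vL: "L m \<le> v" if "m \<in> Km" for m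
      using that fin by (auto simp: v_def)
    have "\<forall>k\<in>K. a k s * v + R k \<le> b k"
    proof
      fix k assume k: "k \<in> K"
      consider "k \<in> K0" | "k \<in> Kp" | "k \<in> Km" using k by (force simp: K0_def Kp_def Km_def)
      then show "a k s * v + R k \<le> b k"
      proof cases
        case 1 then show ?thesis using RK0 by (simp add: K0_def)
      next
        case 2
        then have ap: "a k s > 0" by (simp add: Kp_def)
        have "a k s * v \<le> a k s * U k" using vU[OF 2] ap by simp
        also have "\<dots> = b k - R k" using ap by (simp add: U_def)
        finally show ?thesis by simp
      next
        case 3
        then have am: "a k s < 0" by (simp add: Km_def)
        have "a k s * v \<le> a k s * L k" using vL[OF 3] am by (simp add: mult_le_cancel_left)
        also have "\<dots> = b k - R k" using am by (simp add: L_def)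
        finally show ?thesis by simp
      qed
    qed
    moreover have "(\<Sum>t\<in>insert s X. a k t * (z(s := v)) t) = a k s * v + R k" for k
      using insert.hyps by (auto simp: R_def intro!: sum.cong)
    ultimately have "\<forall>k\<in>K. (\<Sum>t\<in>insert s X. a k t * (z(s := v)) t) \<le> b k" by simp
    then show False using insert.prems(2) by blast
  qed
  obtain l' where l': "\<forall>k\<in>K'. 0 \<le> l' k" "\<forall>t\<in>X. (\<Sum>k\<in>K'. l' k * a' k t) = 0"
     "(\<Sum>k\<in>K'. l' k * b' k) < 0"
    using insert.IH[OF finK' infeas] by blast
  define l where "l k = (if k \<in> K0 then l' (2*k) else 0) + (if k \<in> Kp then (\<Sum>m\<in>Km. l' (enc k m) * (- a m s)) else 0)
     + (if k \<in> Km then (\<Sum>p\<in>Kp. l' (enc p k) * a p s) else 0)" for k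
  have injE: "inj_on (\<lambda>x. enc (fst x) (snd x)) (Kp \<times> Km)"
    by (auto simp: inj_on_def enc_def)
  have inj2: "inj_on (\<lambda>k::nat. 2*k) K0" by (auto simp: inj_on_def)
  have disj: "(\<lambda>k. 2*k) ` K0 \<inter> (\<lambda>x. enc (fst x) (snd x)) ` (Kp \<times> Km) = {}"
    by (auto simp: enc_def) presburger
  have key: "(\<Sum>k\<in>K. l k * c k) = (\<Sum>j\<in>K'. l' j * T c j)" for c
  proof -
    have "(\<Sum>j\<in>K'. l' j * T c j) = (\<Sum>j\<in>(\<lambda>k. 2*k) ` K0. l' j * T c j) + (\<Sum>j\<in>(\<lambda>x. enc (fst x) (snd x)) ` (Kp \<times> Km). l' j * T c j)"
      unfolding K'_def using fin disj by (intro sum.union_disjoint) auto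
    also have "\<dots> = (\<Sum>k\<in>K0. l' (2*k) * c k) + (\<Sum>(p,m)\<in>Kp \<times> Km. l' (enc p m) * ((- a m s) * c p + a p s * c m))"
      by (simp add: sum.reindex[OF inj2] sum.reindex[OF injE] T1 T2 case_prod_unfold)
    also have "(\<Sum>(p,m)\<in>Kp \<times> Km. l' (enc p m) * ((- a m s) * c p + a p s * c m)) =
        (\<Sum>p\<in>Kp. \<Sum>m\<in>Km. l' (enc p m) * (- a m s) * c p) + (\<Sum>m\<in>Km. \<Sum>p\<in>Kp. l' (enc p m) * a p s * c m)"
    proof -
      have "(\<Sum>(p,m)\<in>Kp \<times> Km. l' (enc p m) * ((- a m s) * c p + a p s * c m)) =
        (\<Sum>p\<in>Kp. \<Sum>m\<in>Km. l' (enc p m) * (- a m s) * c p + l' (enc p m) * a p s * c m)"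
        by (simp add: sum.cartesian_product algebra_simps)
      also have "\<dots> = (\<Sum>p\<in>Kp. \<Sum>m\<in>Km. l' (enc p m) * (- a m s) * c p) + (\<Sum>p\<in>Kp. \<Sum>m\<in>Km. l' (enc p m) * a p s * c m)"
        by (simp only: sum.distrib)
      also have "(\<Sum>p\<in>Kp. \<Sum>m\<in>Km. l' (enc p m) * a p s * c m) = (\<Sum>m\<in>Km. \<Sum>p\<in>Kp. l' (enc p m) * a p s * c m)"
        by (rule sum.swap)
      finally show ?thesis .
    qed
    also have "\<dots> = (\<Sum>p\<in>Kp. (\<Sum>m\<in>Km. l' (enc p m) * (- a m s)) * c p) + (\<Sum>m\<in>Km. (\<Sum>p\<in>Kp. l' (enc p m) * a p s) * c m)"
      by (simp add: sum_distrib_right)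
    finally have R: "(\<Sum>j\<in>K'. l' j * T c j) = (\<Sum>k\<in>K0. l' (2*k) * c k) + (\<Sum>p\<in>Kp. (\<Sum>m\<in>Km. l' (enc p m) * (- a m s)) * c p) + (\<Sum>m\<in>Km. (\<Sum>p\<in>Kp. l' (enc p m) * a p s) * c m)"
      by simp
    have sub: "K0 \<subseteq> K" "Kp \<subseteq> K" "Km \<subseteq> K" by (auto simp: K0_def Kp_def Km_def)
    have "(\<Sum>k\<in>K. l k * c k) = (\<Sum>k\<in>K. (if k \<in> K0 then l' (2*k) * c k else 0)) + (\<Sum>k\<in>K. (if k \<in> Kp then (\<Sum>m\<in>Km. l' (enc k m) * (- a m s)) * c k else 0))
       + (\<Sum>k\<in>K. (if k \<in> Km then (\<Sum>p\<in>Kp. l' (enc p k) * a p s) * c k else 0))"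
    proof -
      have "(\<Sum>k\<in>K. l k * c k) = (\<Sum>k\<in>K. (if k \<in> K0 then l' (2*k) * c k else 0) + (if k \<in> Kp then (\<Sum>m\<in>Km. l' (enc k m) * (- a m s)) * c k else 0)
       + (if k \<in> Km then (\<Sum>p\<in>Kp. l' (enc p k) * a p s) * c k else 0))"
        by (rule sum.cong) (simp_all add: l_def distrib_right)
      then show ?thesis by (simp only: sum.distrib)
    qed
    also have "\<dots> = (\<Sum>k\<in>K0. l' (2*k) * c k) + (\<Sum>p\<in>Kp. (\<Sum>m\<in>Km. l' (enc p m) * (- a m s)) * c p) + (\<Sum>m\<in>Km. (\<Sum>p\<in>Kp. l' (enc p m) * a p s) * c m)"
      using sub insert.prems(1) by (simp add: sum.inter_restrict[symmetric] Int_absorb1 Int_absorb2)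
    finally show ?thesis using R by simp
  qed
  have nn: "0 \<le> l k" if "k \<in> K" for k
  proof -
    have a: "0 \<le> (if k \<in> K0 then l' (2*k) else 0)" using l'(1) by (auto simp: K'_def)
    have encK: "enc p m \<in> K'" if "p \<in> Kp" "m \<in> Km" for p m
      using that unfolding K'_def by (intro UnI2 image_eqI[of _ _ "(p,m)"]) auto
    have b: "0 \<le> (if k \<in> Kp then (\<Sum>m\<in>Km. l' (enc k m) * (- a m s)) else 0)"
    proof -
      have "0 \<le> l' (enc k m) * (- a m s)" if "k \<in> Kp" "m \<in> Km" for m
        using l'(1) encK[OF that] that by (intro mult_nonneg_nonneg) (auto simp: Km_def)
      then show ?thesis by (auto intro!: sum_nonneg)
    qed
    have c: "0 \<le> (if k \<in> Km then (\<Sum>p\<in>Kp. l' (enc p k) * a p s) else 0)"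
    proof -
      have "0 \<le> l' (enc p k) * a p s" if "p \<in> Kp" "k \<in> Km" for p
        using l'(1) encK[OF that] that by (intro mult_nonneg_nonneg) (auto simp: Kp_def)
      then show ?thesis by (auto intro!: sum_nonneg)
    qed
    show ?thesis using a b c by (simp add: l_def)
  qed
  have ts: "(\<Sum>k\<in>K. l k * a k s) = 0"
  proof -
    have "(\<Sum>k\<in>K. l k * a k s) = (\<Sum>j\<in>K'. l' j * T (\<lambda>k. a k s) j)" by (rule key)
    also have "\<dots> = 0"
    proof (rule sum.neutral, rule ballI)
      fix j assume "j \<in> K'"
      then show "l' j * T (\<lambda>k. a k s) j = 0"
        by (auto simp: K'_def T1 T2 K0_def)
    qed
    finally show ?thesis .
  qed
  have tX: "(\<Sum>k\<in>K. l k * a k t) = 0" if "t \<in> X" for t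
    using key[of "\<lambda>k. a k t"] l'(2) that by (simp add: a'_def)
  have bb: "(\<Sum>k\<in>K. l k * b k) < 0" using key[of b] l'(3) by (simp add: b'_def)
  show ?case using nn ts tX bb by (intro exI[of _ l]) auto
qed


lemma farkas:
  fixes a :: "'k \<Rightarrow> 'x \<Rightarrow> real" and b :: "'k \<Rightarrow> real"
  assumes "finite X" "finite K"
    and "\<not> (\<exists>z. \<forall>k\<in>K. (\<Sum>t\<in>X. a k t * z t) \<le> b k)"
  shows "\<exists>l. (\<forall>k\<in>K. 0 \<le> l k) \<and> (\<forall>t\<in>X. (\<Sum>k\<in>K. l k * a k t) = 0) \<and> (\<Sum>k\<in>K. l k * b k) < 0"
proof -
  obtain h where h: "bij_betw h {0..<card K} K" using ex_bij_betw_nat_finite[OF assms(2)] by blast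
  let ?N = "{0..<card K}"
  have im: "h ` ?N = K" and inj: "inj_on h ?N" using h by (auto simp: bij_betw_def)
  have "\<not> (\<exists>z. \<forall>j\<in>?N. (\<Sum>t\<in>X. a (h j) t * z t) \<le> b (h j))"
  proof
    assume "\<exists>z. \<forall>j\<in>?N. (\<Sum>t\<in>X. a (h j) t * z t) \<le> b (h j)"
    then obtain z where z: "\<forall>j\<in>?N. (\<Sum>t\<in>X. a (h j) t * z t) \<le> b (h j)" by blast
    have "\<forall>k\<in>K. (\<Sum>t\<in>X. a k t * z t) \<le> b k"
    proof
      fix k assume "k \<in> K"
      then have "k \<in> h ` ?N" using im by simp
      then obtain j where "j \<in> ?N" "k = h j" by blast
      then show "(\<Sum>t\<in>X. a k t * z t) \<le> b k" using z by simp
    qed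
    then show False using assms(3) by blast
  qed
  from farkas_nat[OF assms(1) _ this] obtain l' where l':
    "\<forall>k\<in>?N. 0 \<le> l' k" "\<forall>t\<in>X. (\<Sum>k\<in>?N. l' k * a (h k) t) = 0" "(\<Sum>k\<in>?N. l' k * b (h k)) < 0"
    by auto
  define l where "l k = l' (inv_into ?N h k)" for k
  have lh: "l (h j) = l' j" if "j \<in> ?N" for j using inj that by (simp add: l_def)
  have S: "(\<Sum>k\<in>K. l k * g k) = (\<Sum>j\<in>?N. l' j * g (h j))" for g
    using sum.reindex_bij_betw[OF h, of "\<lambda>k. l k * g k", symmetric] lh by simp
  show ?thesis
  proof (intro exI[of _ l] conjI ballI)
    fix k assume "k \<in> K"
    then have "k \<in> h ` ?N" using im by simp
    then obtain j where "j \<in> ?N" "k = h j" by blast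
    then show "0 \<le> l k" using lh l'(1) by simp
  next
    fix t assume "t \<in> X" then show "(\<Sum>k\<in>K. l k * a k t) = 0" using S l'(2) by simp
  next
    show "(\<Sum>k\<in>K. l k * b k) < 0" using S l'(3) by simp
  qed
qed

lemma sum_opt_split:
  fixes F :: "('k + 'j \<times> bool) option \<Rightarrow> real"
  assumes "finite K" "finite J"
  shows "(\<Sum>\<kappa>\<in>insert None (Some ` (Inl ` K \<union> Inr ` (J \<times> UNIV))). F \<kappa>) =
     F None + (\<Sum>k\<in>K. F (Some (Inl k))) + (\<Sum>j\<in>J. F (Some (Inr (j,True))) + F (Some (Inr (j,False))))"
proof -
  have f: "finite (Some ` (Inl ` K \<union> Inr ` (J \<times> (UNIV::bool set))))" using assms by auto
  have "(\<Sum>\<kappa>\<in>insert None (Some ` (Inl ` K \<union> Inr ` (J \<times> UNIV))). F \<kappa>) =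
      F None + (\<Sum>\<kappa>\<in>Some ` (Inl ` K \<union> Inr ` (J \<times> UNIV)). F \<kappa>)"
    using f by (subst sum.insert) auto
  also have "(\<Sum>\<kappa>\<in>Some ` (Inl ` K \<union> Inr ` (J \<times> UNIV)). F \<kappa>) = (\<Sum>\<kappa>\<in>Inl ` K \<union> Inr ` (J \<times> UNIV). F (Some \<kappa>))"
    by (simp add: sum.reindex)
  also have "\<dots> = (\<Sum>\<kappa>\<in>Inl ` K. F (Some \<kappa>)) + (\<Sum>\<kappa>\<in>Inr ` (J \<times> UNIV). F (Some \<kappa>))"
    using assms by (intro sum.union_disjoint) auto
  also have "(\<Sum>\<kappa>\<in>Inl ` K. F (Some \<kappa>)) = (\<Sum>k\<in>K. F (Some (Inl k)))" by (simp add: sum.reindex)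
  also have "(\<Sum>\<kappa>\<in>Inr ` (J \<times> UNIV). F (Some \<kappa>)) = (\<Sum>p\<in>J \<times> UNIV. F (Some (Inr p)))" by (simp add: sum.reindex)
  also have "\<dots> = (\<Sum>j\<in>J. \<Sum>bb\<in>UNIV. F (Some (Inr (j,bb))))" by (simp add: sum.cartesian_product)
  also have "\<dots> = (\<Sum>j\<in>J. F (Some (Inr (j,True))) + F (Some (Inr (j,False))))" by (simp add: UNIV_bool add.commute)
  finally show ?thesis by simp
qed

lemma lp_dual:
  fixes A :: "'k \<Rightarrow> 'x \<Rightarrow> real" and E :: "'j \<Rightarrow> 'x \<Rightarrow> real" and c :: "'x \<Rightarrow> real"
  assumes fin: "finite X" "finite K" "finite J"
    and feas: "\<exists>z. (\<forall>k\<in>K. (\<Sum>t\<in>X. A k t * z t) \<le> b k) \<and> (\<forall>j\<in>J. (\<Sum>t\<in>X. E j t * z t) = d j)"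
    and bnd: "\<And>z. (\<forall>k\<in>K. (\<Sum>t\<in>X. A k t * z t) \<le> b k) \<Longrightarrow> (\<forall>j\<in>J. (\<Sum>t\<in>X. E j t * z t) = d j)
                \<Longrightarrow> (\<Sum>t\<in>X. c t * z t) < v"
  shows "\<exists>u B. B < v \<and> (\<forall>z. (\<forall>k\<in>K. (\<Sum>t\<in>X. A k t * z t) \<le> b k) \<longrightarrow>
            (\<Sum>t\<in>X. c t * z t) + (\<Sum>j\<in>J. u j * ((\<Sum>t\<in>X. E j t * z t) - d j)) \<le> B)"
proof -
  define KK :: "('k + 'j \<times> bool) option set" where "KK = insert None (Some ` (Inl ` K \<union> Inr ` (J \<times> UNIV)))"
  define a where "a \<kappa> = (case \<kappa> of None \<Rightarrow> (\<lambda>t. - c t) | Some (Inl k) \<Rightarrow> A k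
      | Some (Inr (j, True)) \<Rightarrow> E j | Some (Inr (j, False)) \<Rightarrow> (\<lambda>t. - E j t))" for \<kappa>
  define bb where "bb \<kappa> = (case \<kappa> of None \<Rightarrow> - v | Some (Inl k) \<Rightarrow> b k
      | Some (Inr (j, True)) \<Rightarrow> d j | Some (Inr (j, False)) \<Rightarrow> - d j)" for \<kappa>
  have finKK: "finite KK" using fin by (simp add: KK_def)
  have split: "(\<Sum>\<kappa>\<in>KK. F \<kappa>) = F None + (\<Sum>k\<in>K. F (Some (Inl k))) + (\<Sum>j\<in>J. F (Some (Inr (j,True))) + F (Some (Inr (j,False))))" for F :: "('k + 'j \<times> bool) option \<Rightarrow> real"
    unfolding KK_def using sum_opt_split[OF fin(2,3), of F] by simp
  have "\<not> (\<exists>z. \<forall>\<kappa>\<in>KK. (\<Sum>t\<in>X. a \<kappa> t * z t) \<le> bb \<kappa>)"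
  proof
    assume "\<exists>z. \<forall>\<kappa>\<in>KK. (\<Sum>t\<in>X. a \<kappa> t * z t) \<le> bb \<kappa>"
    then obtain z where z: "\<forall>\<kappa>\<in>KK. (\<Sum>t\<in>X. a \<kappa> t * z t) \<le> bb \<kappa>" by blast
    have 1: "\<forall>k\<in>K. (\<Sum>t\<in>X. A k t * z t) \<le> b k"
    proof
      fix k assume "k \<in> K"
      then have "Some (Inl k) \<in> KK" by (simp add: KK_def)
      from z[rule_format, OF this] show "(\<Sum>t\<in>X. A k t * z t) \<le> b k" by (simp add: a_def bb_def)
    qed
    have 2: "\<forall>j\<in>J. (\<Sum>t\<in>X. E j t * z t) = d j"
    proof
      fix j assume j: "j \<in> J"
      have "Some (Inr (j,True)) \<in> KK" "Some (Inr (j,False)) \<in> KK" using j by (auto simp: KK_def)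
      from z[rule_format, OF this(1)] z[rule_format, OF this(2)]
      have "(\<Sum>t\<in>X. E j t * z t) \<le> d j" "(\<Sum>t\<in>X. - E j t * z t) \<le> - d j"
        by (simp_all add: a_def bb_def)
      moreover from this(2) have "- (\<Sum>t\<in>X. E j t * z t) \<le> - d j" by (simp add: sum_negf)
      ultimately show "(\<Sum>t\<in>X. E j t * z t) = d j" by simp
    qed
    have "None \<in> KK" by (simp add: KK_def)
    from z[rule_format, OF this] have "(\<Sum>t\<in>X. - c t * z t) \<le> - v" by (simp add: a_def bb_def)
    then have "v \<le> (\<Sum>t\<in>X. c t * z t)" by (simp add: sum_negf)
    with bnd[OF 1 2] show False by simp
  qed
  from farkas[OF fin(1) finKK this] obtain l where l: "\<forall>\<kappa>\<in>KK. 0 \<le> l \<kappa>"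
    "\<forall>t\<in>X. (\<Sum>\<kappa>\<in>KK. l \<kappa> * a \<kappa> t) = 0" "(\<Sum>\<kappa>\<in>KK. l \<kappa> * bb \<kappa>) < 0" by blast
  define \<mu> where "\<mu> = l None"
  define w where "w j = l (Some (Inr (j,True))) - l (Some (Inr (j,False)))" for j
  have mu0: "0 \<le> \<mu>" using l(1) by (simp add: KK_def \<mu>_def)
  have lk: "0 \<le> l (Some (Inl k))" if "k \<in> K" for k using l(1) that by (simp add: KK_def)
  have iden: "- \<mu> * (\<Sum>t\<in>X. c t * z t) + (\<Sum>k\<in>K. l (Some (Inl k)) * (\<Sum>t\<in>X. A k t * z t))
       + (\<Sum>j\<in>J. w j * (\<Sum>t\<in>X. E j t * z t)) = 0" for z
  proof -
    have "(\<Sum>\<kappa>\<in>KK. l \<kappa> * (\<Sum>t\<in>X. a \<kappa> t * z t)) = (\<Sum>t\<in>X. (\<Sum>\<kappa>\<in>KK. l \<kappa> * a \<kappa> t) * z t)"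
      by (simp add: sum_distrib_left sum_distrib_right sum.swap[of _ KK X] mult.assoc)
    also have "\<dots> = 0" using l(2) by simp
    finally have "(\<Sum>\<kappa>\<in>KK. l \<kappa> * (\<Sum>t\<in>X. a \<kappa> t * z t)) = 0" .
    then show ?thesis
      by (simp add: split a_def \<mu>_def w_def sum_negf algebra_simps sum_subtractf sum.distrib)
  qed
  have bsum: "- \<mu> * v + (\<Sum>k\<in>K. l (Some (Inl k)) * b k) + (\<Sum>j\<in>J. w j * d j) < 0"
    using l(3) by (simp add: split bb_def \<mu>_def w_def algebra_simps sum_subtractf sum.distrib)
  have Sle: "(\<Sum>k\<in>K. l (Some (Inl k)) * (\<Sum>t\<in>X. A k t * z t)) \<le> (\<Sum>k\<in>K. l (Some (Inl k)) * b k)"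
    if "\<forall>k\<in>K. (\<Sum>t\<in>X. A k t * z t) \<le> b k" for z
    using that lk by (intro sum_mono mult_left_mono) auto
  have mupos: "\<mu> > 0"
  proof (rule ccontr)
    assume "\<not> \<mu> > 0" then have m: "\<mu> = 0" using mu0 by simp
    obtain z where z: "\<forall>k\<in>K. (\<Sum>t\<in>X. A k t * z t) \<le> b k" "\<forall>j\<in>J. (\<Sum>t\<in>X. E j t * z t) = d j"
      using feas by blast
    have "(\<Sum>j\<in>J. w j * (\<Sum>t\<in>X. E j t * z t)) = (\<Sum>j\<in>J. w j * d j)" using z(2) by simp
    then show False using iden[of z] Sle[OF z(1)] bsum m by simp
  qed
  define u where "u j = - w j / \<mu>" for j
  define B where "B = ((\<Sum>k\<in>K. l (Some (Inl k)) * b k) + (\<Sum>j\<in>J. w j * d j)) / \<mu>"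
  show ?thesis
  proof (intro exI[of _ u] exI[of _ B] conjI allI impI)
    show "B < v" using bsum mupos by (simp add: B_def divide_simps algebra_simps)
  next
    fix z assume z: "\<forall>k\<in>K. (\<Sum>t\<in>X. A k t * z t) \<le> b k"
    have "\<mu> * ((\<Sum>t\<in>X. c t * z t) + (\<Sum>j\<in>J. u j * ((\<Sum>t\<in>X. E j t * z t) - d j)))
        = \<mu> * (\<Sum>t\<in>X. c t * z t) - (\<Sum>j\<in>J. w j * (\<Sum>t\<in>X. E j t * z t)) + (\<Sum>j\<in>J. w j * d j)"
    proof -
      have "\<mu> * (\<Sum>j\<in>J. u j * ((\<Sum>t\<in>X. E j t * z t) - d j)) = (\<Sum>j\<in>J. (\<mu> * u j) * ((\<Sum>t\<in>X. E j t * z t) - d j))"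
        by (simp add: sum_distrib_left mult.assoc)
      also have "\<dots> = (\<Sum>j\<in>J. - w j * ((\<Sum>t\<in>X. E j t * z t) - d j))"
        using mupos by (simp add: u_def)
      also have "\<dots> = - (\<Sum>j\<in>J. w j * (\<Sum>t\<in>X. E j t * z t)) + (\<Sum>j\<in>J. w j * d j)"
        by (simp add: algebra_simps sum_subtractf sum_negf)
      finally show ?thesis by (simp add: distrib_left)
    qed
    also have "\<dots> = (\<Sum>k\<in>K. l (Some (Inl k)) * (\<Sum>t\<in>X. A k t * z t)) + (\<Sum>j\<in>J. w j * d j)"
      using iden[of z] by simp
    also have "\<dots> \<le> \<mu> * B" using Sle[OF z] mupos by (simp add: B_def)
    finally show "(\<Sum>t\<in>X. c t * z t) + (\<Sum>j\<in>J. u j * ((\<Sum>t\<in>X. E j t * z t) - d j)) \<le> B"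
      using mupos by simp
  qed
qed



definition dl :: "'x \<Rightarrow> 'x \<Rightarrow> real" where "dl t = (\<lambda>s. if s = t then 1 else 0)"
definition xlin :: "'x set \<Rightarrow> (('x \<Rightarrow> real) \<Rightarrow> real) \<Rightarrow> bool" where
  "xlin X L \<longleftrightarrow> (\<forall>z. L z = (\<Sum>t\<in>X. L (dl t) * z t))"

lemma xlinE: "xlin X L \<Longrightarrow> L z = (\<Sum>t\<in>X. L (dl t) * z t)"
  by (unfold xlin_def) (erule allE, assumption)

lemma xlinD: "xlin X L \<Longrightarrow> (\<Sum>t\<in>X. L (dl t) * z t) = L z"
  by (drule xlinE[of _ _ z]) (erule sym)

lemma xlin_coord: "finite X \<Longrightarrow> t \<in> X \<Longrightarrow> xlin X (\<lambda>z. z t)"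
  unfolding xlin_def
proof
  fix z assume "finite X" "t \<in> X"
  have "(\<Sum>s\<in>X. dl s t * z s) = (\<Sum>s\<in>X. if s = t then z s else 0)"
    by (rule sum.cong) (auto simp: dl_def)
  also have "\<dots> = z t" using \<open>finite X\<close> \<open>t \<in> X\<close> by (simp add: sum.delta')
  finally show "z t = (\<Sum>s\<in>X. dl s t * z s)" by simp
qed

lemma xlin_add: assumes "xlin X L" "xlin X M" shows "xlin X (\<lambda>z. L z + M z)"
  unfolding xlin_def
proof
  fix z
  have "L z = (\<Sum>t\<in>X. L (dl t) * z t)" "M z = (\<Sum>t\<in>X. M (dl t) * z t)" using assms by (auto intro: xlinE)
  then show "L z + M z = (\<Sum>t\<in>X. (L (dl t) + M (dl t)) * z t)" by (simp only: distrib_right sum.distrib)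
qed

lemma xlin_diff: assumes "xlin X L" "xlin X M" shows "xlin X (\<lambda>z. L z - M z)"
  unfolding xlin_def
proof
  fix z
  have "L z = (\<Sum>t\<in>X. L (dl t) * z t)" "M z = (\<Sum>t\<in>X. M (dl t) * z t)" using assms by (auto intro: xlinE)
  then show "L z - M z = (\<Sum>t\<in>X. (L (dl t) - M (dl t)) * z t)" by (simp only: left_diff_distrib sum_subtractf)
qed

lemma xlin_scale: assumes "xlin X L" shows "xlin X (\<lambda>z. c * L z)"
  unfolding xlin_def
proof
  fix z
  have "L z = (\<Sum>t\<in>X. L (dl t) * z t)" using assms by (auto intro: xlinE)
  then show "c * L z = (\<Sum>t\<in>X. (c * L (dl t)) * z t)" by (simp only: sum_distrib_left mult.assoc)
qed

lemma xlin_neg: assumes "xlin X L" shows "xlin X (\<lambda>z. - L z)"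
  unfolding xlin_def
proof
  fix z
  have "L z = (\<Sum>t\<in>X. L (dl t) * z t)" using assms by (auto intro: xlinE)
  then show "- L z = (\<Sum>t\<in>X. (- L (dl t)) * z t)" by (simp only: sum_negf mult_minus_left)
qed

lemma xlin_zero: "xlin X (\<lambda>z. 0)"
  by (simp add: xlin_def)

lemma xlin_sum: "finite F \<Longrightarrow> (\<And>i. i \<in> F \<Longrightarrow> xlin X (L i)) \<Longrightarrow> xlin X (\<lambda>z. \<Sum>i\<in>F. L i z)"
proof (induction F rule: finite_induct)
  case empty then show ?case by (simp add: xlin_zero)
next
  case (insert a F)
  then have "xlin X (\<lambda>z. L a z + (\<Sum>i\<in>F. L i z))" by (intro xlin_add) auto
  then show ?case using insert.hyps by simp
qed

lemma xlin_div: assumes "xlin X L" shows "xlin X (\<lambda>z. L z / c)"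
proof -
  have "xlin X (\<lambda>z. (1/c) * L z)" using assms by (rule xlin_scale)
  then show ?thesis by simp
qed

lemmas xlin_intros = xlin_coord xlin_add xlin_diff xlin_scale xlin_neg xlin_sum xlin_div

datatype 'v fv = PS 'v | PP nat 'v | QQ nat 'v 'v | R1 nat | R2 nat

lemma ereal_le_gamma: "0 \<le> \<gamma> \<Longrightarrow> (ereal r \<le> \<gamma>) \<longleftrightarrow> (\<gamma> = \<infinity> \<or> r \<le> real_of_ereal \<gamma>)"
  by (cases \<gamma>) auto

definition Gobj where
  "Gobj V w n Sl Su u ps p q r1 r2 = flow_obj V n Sl Su ps r1 r2 +
      (\<Sum>i\<in>{1..n}. \<Sum>x\<in>V. u i x * (div_w V w (q i) x - ps x + p i x + r2 i - r1 i))"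

lemma pd_inner_Gobj: "pd_inner V w n C Sl Su \<gamma> u =
   Sup {ereal (Gobj V w n Sl Su u ps p q r1 r2) | ps p q r1 r2. dual_box V w n C \<gamma> p q r1 r2}"
  by (simp add: pd_inner_def Gobj_def)

lemma weak_pd_maxflow:
  "maxflow_value V w n C Sl Su \<gamma> \<le> pd_inner V w n C Sl Su \<gamma> u"
  unfolding maxflow_value_def pd_inner_Gobj
proof (rule Sup_least)
  fix y assume "y \<in> {ereal (flow_obj V n Sl Su ps r1 r2) | ps p q r1 r2.
            dual_box V w n C \<gamma> p q r1 r2 \<and>
            (\<forall>i\<in>{1..n}. \<forall>x\<in>V. div_w V w (q i) x - ps x + p i x = r1 i - r2 i)}"
  then obtain ps p q r1 r2 where y: "y = ereal (flow_obj V n Sl Su ps r1 r2)" "dual_box V w n C \<gamma> p q r1 r2"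
     "\<forall>i\<in>{1..n}. \<forall>x\<in>V. div_w V w (q i) x - ps x + p i x = r1 i - r2 i" by blast
  have "Gobj V w n Sl Su u ps p q r1 r2 = flow_obj V n Sl Su ps r1 r2"
  proof -
    have "(\<Sum>i\<in>{1..n}. \<Sum>x\<in>V. u i x * (div_w V w (q i) x - ps x + p i x + r2 i - r1 i)) = 0"
      using y(3) by (intro sum.neutral ballI) (simp add: algebra_simps)
    then show ?thesis by (simp add: Gobj_def)
  qed
  moreover have "ereal (Gobj V w n Sl Su u ps p q r1 r2) \<in> {ereal (Gobj V w n Sl Su u ps p q r1 r2) | ps p q r1 r2. dual_box V w n C \<gamma> p q r1 r2}"
    using y(2) by (intro CollectI exI[of _ ps] exI[of _ p] exI[of _ q] exI[of _ r1] exI[of _ r2]) simp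
  ultimately have "y \<in> {ereal (Gobj V w n Sl Su u ps p q r1 r2) | ps p q r1 r2. dual_box V w n C \<gamma> p q r1 r2}"
    using y(1) by simp
  then show "y \<le> Sup {ereal (Gobj V w n Sl Su u ps p q r1 r2) | ps p q r1 r2. dual_box V w n C \<gamma> p q r1 r2}"
    by (rule Sup_upper)
qed

lemma weak_duality: "maxflow_value V w n C Sl Su \<gamma> \<le> pd_value V w n C Sl Su \<gamma>"
  unfolding pd_value_def by (rule INF_greatest) (rule weak_pd_maxflow)

lemma strong_duality:
  fixes V :: "'v set" and \<gamma> :: ereal
  assumes finV: "finite V" and g0: "0 \<le> \<gamma>" and pdv: "pd_value V w n C Sl Su \<gamma> = ereal v"
  shows "pd_value V w n C Sl Su \<gamma> \<le> maxflow_value V w n C Sl Su \<gamma>"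
proof (rule ccontr)
  assume "\<not> ?thesis"
  then have mlt: "maxflow_value V w n C Sl Su \<gamma> < ereal v" using pdv by simp
  define I where "I = {1..n}"
  define X where "X = PS ` V \<union> (\<lambda>(i,x). PP i x) ` (I \<times> V) \<union> (\<lambda>(i,x,y). QQ i x y) ` (I \<times> V \<times> V)
     \<union> R1 ` I \<union> R2 ` I"
  have finX: "finite X" using finV by (simp add: X_def I_def)
  have inS: "PS x \<in> X" if "x \<in> V" for x using that unfolding X_def by blast
  have inP: "PP i x \<in> X" if "i \<in> I" "x \<in> V" for i x
  proof -
    have "PP i x \<in> (\<lambda>(i,x). PP i x) ` (I \<times> V)" using that by (intro image_eqI[of _ _ "(i,x)"]) auto
    then show ?thesis unfolding X_def by blast
  qed
  have inQ: "QQ i x y \<in> X" if "i \<in> I" "x \<in> V" "y \<in> V" for i x y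
  proof -
    have "QQ i x y \<in> (\<lambda>(i,x,y). QQ i x y) ` (I \<times> V \<times> V)" using that by (intro image_eqI[of _ _ "(i,x,y)"]) auto
    then show ?thesis unfolding X_def by blast
  qed
  note inX = inS inP inQ
  have inR: "R1 i \<in> X" "R2 i \<in> X" if "i \<in> I" for i
    using that unfolding X_def by blast+
  define g where "g = real_of_ereal \<gamma>"
  define K :: "((('v fv \<Rightarrow> real) \<Rightarrow> real) \<times> real) set" where "K =
     (\<lambda>(i,x,y). (\<lambda>z. z (QQ i x y), 1)) ` {(i,x,y). i \<in> I \<and> x \<in> V \<and> y \<in> V \<and> w x y > 0}
   \<union> (\<lambda>(i,x,y). (\<lambda>z. - z (QQ i x y), 1)) ` {(i,x,y). i \<in> I \<and> x \<in> V \<and> y \<in> V \<and> w x y > 0}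
   \<union> (\<lambda>(i,x). (\<lambda>z. z (PP i x), C i x)) ` (I \<times> V)
   \<union> (\<lambda>i. (\<lambda>z. - z (R1 i), 0)) ` I \<union> (\<lambda>i. (\<lambda>z. - z (R2 i), 0)) ` I
   \<union> (if \<gamma> = \<infinity> then {} else (\<lambda>i. (\<lambda>z. z (R1 i), g)) ` I \<union> (\<lambda>i. (\<lambda>z. z (R2 i), g)) ` I)"
  have finK: "finite K"
  proof -
    have sub: "{(i,x,y). i \<in> I \<and> x \<in> V \<and> y \<in> V \<and> w x y > 0} \<subseteq> I \<times> V \<times> V" by auto
    have "finite {(i,x,y). i \<in> I \<and> x \<in> V \<and> y \<in> V \<and> w x y > 0}"
      using finite_subset[OF sub] finV by (simp add: I_def)
    then show ?thesis using finV by (simp add: K_def I_def)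
  qed
  have xlK: "xlin X (fst k)" if "k \<in> K" for k
    using that finX inX inR unfolding K_def by (auto split: if_splits intro!: xlin_intros)
  define J where "J = I \<times> V"
  define eqf where "eqf j z = (case j of (i,x) \<Rightarrow> (1/2) * (\<Sum>y\<in>V. w x y * (z (QQ i x y) - z (QQ i y x)))
      - z (PS x) + z (PP i x) - z (R1 i) + z (R2 i))" for j and z :: "'v fv \<Rightarrow> real"
  have xlJ: "xlin X (eqf j)" if "j \<in> J" for j
    using that finX finV inX inR unfolding J_def eqf_def by (auto intro!: xlin_intros)
  define cf where "cf z = (\<Sum>x\<in>V. z (PS x)) + (\<Sum>i\<in>I. real (Sl i) * z (R1 i) - real (Su i) * z (R2 i))" for z :: "'v fv \<Rightarrow> real"
  have xlc: "xlin X cf"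
    using finX finV inX inR unfolding cf_def by (auto simp: I_def intro!: xlin_intros)
  have boxK: "(\<forall>k\<in>K. fst k z \<le> snd k) \<longleftrightarrow> dual_box V w n C \<gamma> (\<lambda>i x. z (PP i x)) (\<lambda>i x y. z (QQ i x y)) (\<lambda>i. z (R1 i)) (\<lambda>i. z (R2 i))" for z
  proof -
    have "(\<forall>k\<in>K. fst k z \<le> snd k) \<longleftrightarrow> (\<forall>i\<in>I. (\<forall>x\<in>V. \<forall>y\<in>V. w x y > 0 \<longrightarrow> \<bar>z (QQ i x y)\<bar> \<le> 1)
       \<and> (\<forall>x\<in>V. z (PP i x) \<le> C i x) \<and> 0 \<le> z (R1 i) \<and> 0 \<le> z (R2 i)
       \<and> (\<gamma> \<noteq> \<infinity> \<longrightarrow> z (R1 i) \<le> g \<and> z (R2 i) \<le> g))"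
      unfolding K_def by (simp add: ball_Un Ball_image_comp abs_le_iff) blast
    also have "\<dots> \<longleftrightarrow> dual_box V w n C \<gamma> (\<lambda>i x. z (PP i x)) (\<lambda>i x y. z (QQ i x y)) (\<lambda>i. z (R1 i)) (\<lambda>i. z (R2 i))"
      unfolding dual_box_def I_def g_def ereal_le_gamma[OF g0] by blast
    finally show ?thesis .
  qed
  have eqJ: "eqf (i,x) z = div_w V w (\<lambda>a b. z (QQ i a b)) x - z (PS x) + z (PP i x) - z (R1 i) + z (R2 i)" for i x z
    by (simp add: eqf_def div_w_def)
  have sumA: "(\<Sum>t\<in>X. fst k (dl t) * z t) = fst k z" if "k \<in> K" for k z
    using xlK[OF that] by (rule xlinD)
  have sumE: "(\<Sum>t\<in>X. eqf j (dl t) * z t) = eqf j z" if "j \<in> J" for j z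
    using xlJ[OF that] by (rule xlinD)
  have sumC: "(\<Sum>t\<in>X. cf (dl t) * z t) = cf z" for z
    using xlc by (rule xlinD)
  define enc where "enc ps p q r1 r2 = (\<lambda>t. case t of PS x \<Rightarrow> ps x | PP i x \<Rightarrow> p i x | QQ i x y \<Rightarrow> q i x y
       | R1 i \<Rightarrow> r1 i | R2 i \<Rightarrow> r2 i)" for ps :: "'v \<Rightarrow> real" and p :: "nat \<Rightarrow> 'v \<Rightarrow> real"
        and q :: "nat \<Rightarrow> 'v \<Rightarrow> 'v \<Rightarrow> real" and r1 r2 :: "nat \<Rightarrow> real"
  define S0 where "S0 x = - (\<Sum>j\<in>I. \<bar>C j x\<bar>)" for x
  define z0 where "z0 = enc S0 (\<lambda>i x. S0 x) (\<lambda>i x y. 0) (\<lambda>i. 0) (\<lambda>i. 0)"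
  have feasK: "\<forall>k\<in>K. fst k z0 \<le> snd k"
  proof -
    have "S0 x \<le> C i x" if "i \<in> {1..n}" "x \<in> V" for i x
    proof -
      have "\<bar>C i x\<bar> \<le> (\<Sum>j\<in>I. \<bar>C j x\<bar>)" using that by (intro member_le_sum) (auto simp: I_def)
      then show ?thesis by (simp add: S0_def)
    qed
    then have "dual_box V w n C \<gamma> (\<lambda>i x. S0 x) (\<lambda>i x y. 0) (\<lambda>i. 0) (\<lambda>i. 0)"
      using g0 by (simp add: dual_box_def zero_ereal_def[symmetric])
    then show ?thesis unfolding boxK by (simp add: z0_def enc_def)
  qed
  have feasJ: "\<forall>j\<in>J. eqf j z0 = 0"
    by (auto simp: J_def eqf_def z0_def enc_def)
  have bnd: "cf z < v" if "\<forall>k\<in>K. fst k z \<le> snd k" "\<forall>j\<in>J. eqf j z = 0" for z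
  proof -
    let ?ps = "\<lambda>x. z (PS x)" and ?p = "\<lambda>i x. z (PP i x)" and ?q = "\<lambda>i x y. z (QQ i x y)"
      and ?r1 = "\<lambda>i. z (R1 i)" and ?r2 = "\<lambda>i. z (R2 i)"
    have db: "dual_box V w n C \<gamma> ?p ?q ?r1 ?r2" using that(1) boxK by blast
    have eq: "\<forall>i\<in>{1..n}. \<forall>x\<in>V. div_w V w (?q i) x - ?ps x + ?p i x = ?r1 i - ?r2 i"
    proof (intro ballI)
      fix i x assume "i \<in> {1..n}" "x \<in> V"
      then have "eqf (i,x) z = 0" using that(2) by (auto simp: J_def I_def)
      then show "div_w V w (?q i) x - ?ps x + ?p i x = ?r1 i - ?r2 i" by (simp add: eqJ)
    qed
    have "ereal (flow_obj V n Sl Su ?ps ?r1 ?r2) \<in> {ereal (flow_obj V n Sl Su ps r1 r2) | ps p q r1 r2.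
            dual_box V w n C \<gamma> p q r1 r2 \<and>
            (\<forall>i\<in>{1..n}. \<forall>x\<in>V. div_w V w (q i) x - ps x + p i x = r1 i - r2 i)}"
      using db eq by (intro CollectI exI[of _ ?ps] exI[of _ ?p] exI[of _ ?q] exI[of _ ?r1] exI[of _ ?r2]) simp
    then have "ereal (flow_obj V n Sl Su ?ps ?r1 ?r2) \<le> maxflow_value V w n C Sl Su \<gamma>"
      unfolding maxflow_value_def by (rule Sup_upper)
    then have "ereal (flow_obj V n Sl Su ?ps ?r1 ?r2) < ereal v" using mlt by (rule order.strict_trans1)
    then have "flow_obj V n Sl Su ?ps ?r1 ?r2 < v" by simp
    moreover have "cf z = flow_obj V n Sl Su ?ps ?r1 ?r2" by (simp add: cf_def flow_obj_def I_def mult.commute)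
    ultimately show ?thesis by simp
  qed
  have finJ: "finite J" using finV by (simp add: J_def I_def)
  have "\<exists>u B. B < v \<and> (\<forall>z. (\<forall>k\<in>K. (\<Sum>t\<in>X. fst k (dl t) * z t) \<le> snd k) \<longrightarrow>
            (\<Sum>t\<in>X. cf (dl t) * z t) + (\<Sum>j\<in>J. u j * ((\<Sum>t\<in>X. eqf j (dl t) * z t) - 0)) \<le> B)"
  proof (rule lp_dual[OF finX finK finJ])
    show "\<exists>z. (\<forall>k\<in>K. (\<Sum>t\<in>X. fst k (dl t) * z t) \<le> snd k) \<and> (\<forall>j\<in>J. (\<Sum>t\<in>X. eqf j (dl t) * z t) = 0)"
      using feasK feasJ sumA sumE by (intro exI[of _ z0]) simp
  next
    fix z assume "\<forall>k\<in>K. (\<Sum>t\<in>X. fst k (dl t) * z t) \<le> snd k" "\<forall>j\<in>J. (\<Sum>t\<in>X. eqf j (dl t) * z t) = 0"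
    then show "(\<Sum>t\<in>X. cf (dl t) * z t) < v" using bnd sumA sumE sumC by simp
  qed
  then obtain u B where uB: "B < v" "\<And>z. \<forall>k\<in>K. fst k z \<le> snd k \<Longrightarrow> cf z + (\<Sum>j\<in>J. u j * eqf j z) \<le> B"
    using sumA sumE sumC by auto
  define uu where "uu i x = u (i,x)" for i x
  have "pd_inner V w n C Sl Su \<gamma> uu \<le> ereal B"
    unfolding pd_inner_Gobj
  proof (rule Sup_least)
    fix y assume "y \<in> {ereal (Gobj V w n Sl Su uu ps p q r1 r2) | ps p q r1 r2. dual_box V w n C \<gamma> p q r1 r2}"
    then obtain ps p q r1 r2 where y: "y = ereal (Gobj V w n Sl Su uu ps p q r1 r2)" "dual_box V w n C \<gamma> p q r1 r2"
      by blast
    let ?z = "enc ps p q r1 r2"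
    have K1: "\<forall>k\<in>K. fst k ?z \<le> snd k" unfolding boxK using y(2) by (simp add: enc_def)
    have "Gobj V w n Sl Su uu ps p q r1 r2 = cf ?z + (\<Sum>j\<in>J. u j * eqf j ?z)"
    proof -
      have "(\<Sum>j\<in>J. u j * eqf j ?z) = (\<Sum>i\<in>I. \<Sum>x\<in>V. u (i,x) * eqf (i,x) ?z)"
        by (simp add: J_def sum.cartesian_product)
      also have "\<dots> = (\<Sum>i\<in>I. \<Sum>x\<in>V. uu i x * (div_w V w (q i) x - ps x + p i x + r2 i - r1 i))"
        by (intro sum.cong refl) (simp add: eqJ enc_def uu_def algebra_simps)
      finally show ?thesis
        by (simp add: Gobj_def cf_def flow_obj_def enc_def I_def mult.commute)
    qed
    then show "y \<le> ereal B" using uB(2)[OF K1] y(1) by simp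
  qed
  also have "\<dots> < pd_value V w n C Sl Su \<gamma>" using uB(1) pdv by simp
  also have "\<dots> \<le> pd_inner V w n C Sl Su \<gamma> uu" unfolding pd_value_def by (rule INF_lower) simp
  finally show False by simp
qed



definition okU where
  "okU V n Sl Su \<gamma> u \<longleftrightarrow> (\<forall>x\<in>V. (\<Sum>i\<in>{1..n}. u i x) = 1) \<and> (\<forall>i\<in>{1..n}. \<forall>x\<in>V. 0 \<le> u i x) \<and>
     (\<gamma> = \<infinity> \<longrightarrow> (\<forall>i\<in>{1..n}. real (Sl i) \<le> unorm V (u i) \<and> unorm V (u i) \<le> real (Su i)))"

lemma okU_feasible: "okU V n Sl Su \<gamma> u \<longleftrightarrow> u \<in> relax_feasible V n Sl Su \<gamma>"
proof
  assume ok: "okU V n Sl Su \<gamma> u"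
  have "u i x \<le> 1" if "i \<in> {1..n}" "x \<in> V" for i x
  proof -
    have "u i x \<le> (\<Sum>j\<in>{1..n}. u j x)" using ok that by (intro member_le_sum) (auto simp: okU_def)
    then show ?thesis using ok that by (simp add: okU_def)
  qed
  then show "u \<in> relax_feasible V n Sl Su \<gamma>" using ok by (auto simp: okU_def relax_feasible_def Bprime_def)
next
  assume "u \<in> relax_feasible V n Sl Su \<gamma>"
  then show "okU V n Sl Su \<gamma> u" by (auto simp: okU_def relax_feasible_def Bprime_def)
qed

lemma div_sum:
  assumes "finite V" "\<And>x y. w x y = w y x"
  shows "(\<Sum>x\<in>V. u x * div_w V w \<phi> x) = (1/2) * (\<Sum>x\<in>V. \<Sum>y\<in>V. w x y * \<phi> x y * (u x - u y))"
proof -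
  have "(\<Sum>x\<in>V. u x * div_w V w \<phi> x) = (1/2) * ((\<Sum>x\<in>V. \<Sum>y\<in>V. u x * w x y * \<phi> x y) - (\<Sum>x\<in>V. \<Sum>y\<in>V. u x * w x y * \<phi> y x))"
    by (simp add: div_w_def sum_distrib_left sum_subtractf algebra_simps)
  also have "(\<Sum>x\<in>V. \<Sum>y\<in>V. u x * w x y * \<phi> y x) = (\<Sum>y\<in>V. \<Sum>x\<in>V. u x * w x y * \<phi> y x)"
    by (rule sum.swap)
  also have "\<dots> = (\<Sum>x\<in>V. \<Sum>y\<in>V. u y * w x y * \<phi> x y)"
    using assms(2) by (simp add: mult.commute)
  finally show ?thesis by (simp add: algebra_simps sum_subtractf)
qed

lemma Gobj_rearr:
  fixes V :: "'v set" and u p :: "nat \<Rightarrow> 'v \<Rightarrow> real" and q :: "nat \<Rightarrow> 'v \<Rightarrow> 'v \<Rightarrow> real"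
    and ps :: "'v \<Rightarrow> real" and r1 r2 :: "nat \<Rightarrow> real"
  assumes "finite V" "\<And>x y. w x y = w y x"
  shows "Gobj V w n Sl Su u ps p q r1 r2 = (\<Sum>x\<in>V. ps x * (1 - (\<Sum>i\<in>{1..n}. u i x)))
     + (\<Sum>i\<in>{1..n}. \<Sum>x\<in>V. u i x * p i x)
     + (\<Sum>i\<in>{1..n}. (1/2) * (\<Sum>x\<in>V. \<Sum>y\<in>V. w x y * q i x y * (u i x - u i y)))
     + (\<Sum>i\<in>{1..n}. r1 i * (real (Sl i) - unorm V (u i)) + r2 i * (unorm V (u i) - real (Su i)))"
proof -
  have inner: "(\<Sum>x\<in>V. u i x * (div_w V w (q i) x - ps x + p i x + r2 i - r1 i)) =
     (1/2) * (\<Sum>x\<in>V. \<Sum>y\<in>V. w x y * q i x y * (u i x - u i y)) - (\<Sum>x\<in>V. u i x * ps x)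
     + (\<Sum>x\<in>V. u i x * p i x) + (r2 i - r1 i) * unorm V (u i)" for i
  proof -
    have "(\<Sum>x\<in>V. u i x * (div_w V w (q i) x - ps x + p i x + r2 i - r1 i)) =
      (\<Sum>x\<in>V. u i x * div_w V w (q i) x) - (\<Sum>x\<in>V. u i x * ps x) + (\<Sum>x\<in>V. u i x * p i x) + (\<Sum>x\<in>V. u i x * (r2 i - r1 i))"
      by (simp add: algebra_simps sum.distrib sum_subtractf)
    then show ?thesis using div_sum[OF assms, where u="u i" and \<phi>="q i"]
      by (simp add: unorm_def sum_distrib_right mult.commute)
  qed
  have sw: "(\<Sum>i\<in>{1..n}. \<Sum>x\<in>V. u i x * ps x) = (\<Sum>x\<in>V. ps x * (\<Sum>i\<in>{1..n}. u i x))"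
  proof -
    have "(\<Sum>i\<in>{1..n}. \<Sum>x\<in>V. u i x * ps x) = (\<Sum>x\<in>V. \<Sum>i\<in>{1..n}. u i x * ps x)" by (rule sum.swap)
    then show ?thesis by (simp add: sum_distrib_left mult.commute)
  qed
  have "Gobj V w n Sl Su u ps p q r1 r2 = (\<Sum>x\<in>V. ps x) + (\<Sum>i\<in>{1..n}. r1 i * real (Sl i) - r2 i * real (Su i))
     + ((\<Sum>i\<in>{1..n}. (1/2) * (\<Sum>x\<in>V. \<Sum>y\<in>V. w x y * q i x y * (u i x - u i y))) - (\<Sum>i\<in>{1..n}. \<Sum>x\<in>V. u i x * ps x)
     + (\<Sum>i\<in>{1..n}. \<Sum>x\<in>V. u i x * p i x) + (\<Sum>i\<in>{1..n}. (r2 i - r1 i) * unorm V (u i)))"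
    by (simp add: Gobj_def flow_obj_def inner sum.distrib sum_subtractf)
  also have "\<dots> = (\<Sum>x\<in>V. ps x * (1 - (\<Sum>i\<in>{1..n}. u i x)))
     + (\<Sum>i\<in>{1..n}. \<Sum>x\<in>V. u i x * p i x)
     + (\<Sum>i\<in>{1..n}. (1/2) * (\<Sum>x\<in>V. \<Sum>y\<in>V. w x y * q i x y * (u i x - u i y)))
     + (\<Sum>i\<in>{1..n}. r1 i * (real (Sl i) - unorm V (u i)) + r2 i * (unorm V (u i) - real (Su i)))"
    unfolding sw by (simp add: algebra_simps sum.distrib sum_subtractf)
  finally show ?thesis .
qed

lemma pen_bound:
  fixes r1 r2 g t :: real
  assumes "0 \<le> r1" "r1 \<le> g" "0 \<le> r2" "r2 \<le> g" "Sl i \<le> Su i"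
  shows "r1 * (real (Sl i) - t) + r2 * (t - real (Su i)) \<le> P_pen g Sl Su i t"
proof -
  have SS: "real (Sl i) \<le> real (Su i)" using assms(5) by simp
  consider "real (Sl i) \<le> t \<and> t \<le> real (Su i)" | "t > real (Su i)" | "t < real (Sl i)" by linarith
  then show ?thesis
  proof cases
    case 1
    then have "r1 * (real (Sl i) - t) \<le> 0" "r2 * (t - real (Su i)) \<le> 0"
      using assms by (auto intro: mult_nonneg_nonpos)
    then show ?thesis using 1 by (simp add: P_pen_def)
  next
    case 2
    then have "r1 * (real (Sl i) - t) \<le> 0" using assms SS by (intro mult_nonneg_nonpos) auto
    moreover have "r2 * (t - real (Su i)) \<le> g * (t - real (Su i))" using assms 2 by (intro mult_right_mono) auto
    moreover have "P_pen g Sl Su i t = g * (t - real (Su i))" using 2 SS by (simp add: P_pen_def)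
    ultimately show ?thesis by linarith
  next
    case 3
    then have "r2 * (t - real (Su i)) \<le> 0" using assms SS by (intro mult_nonneg_nonpos) auto
    moreover have "r1 * (real (Sl i) - t) \<le> g * (real (Sl i) - t)" using assms 3 by (intro mult_right_mono) auto
    moreover have "P_pen g Sl Su i t = g * (real (Sl i) - t)" using 3 SS by (simp add: P_pen_def)
    ultimately show ?thesis by linarith
  qed
qed

lemma pd_inner_top:
  assumes "\<And>M. \<exists>ps p q r1 r2. dual_box V w n C \<gamma> p q r1 r2 \<and> M \<le> Gobj V w n Sl Su u ps p q r1 r2"
  shows "pd_inner V w n C Sl Su \<gamma> u = \<infinity>"
proof (rule ereal_top)
  fix M
  obtain ps p q r1 r2 where h: "dual_box V w n C \<gamma> p q r1 r2" "M \<le> Gobj V w n Sl Su u ps p q r1 r2"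
    using assms by blast
  have "ereal (Gobj V w n Sl Su u ps p q r1 r2) \<in> {ereal (Gobj V w n Sl Su u ps p q r1 r2) | ps p q r1 r2. dual_box V w n C \<gamma> p q r1 r2}"
    using h(1) by (intro CollectI exI[of _ ps] exI[of _ p] exI[of _ q] exI[of _ r1] exI[of _ r2]) simp
  then have "ereal (Gobj V w n Sl Su u ps p q r1 r2) \<le> pd_inner V w n C Sl Su \<gamma> u"
    unfolding pd_inner_Gobj by (rule Sup_upper)
  then show "ereal M \<le> pd_inner V w n C Sl Su \<gamma> u" using h(2) by (meson ereal_less_eq(3) order_trans)
qed

lemma sgn_mult_self: "sgn (d::real) * d = \<bar>d\<bar>"
  by (simp add: sgn_if)

lemma pd_inner_ok:
  fixes V :: "'v set" and u :: "nat \<Rightarrow> 'v \<Rightarrow> real"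
  assumes finV: "finite V" and sym: "\<And>x y. w x y = w y x" and wpos: "\<And>x y. w x y \<ge> 0"
    and SlSu: "\<And>i. i \<in> {1..n} \<Longrightarrow> Sl i \<le> Su i" and g0: "0 \<le> \<gamma>" and ok: "okU V n Sl Su \<gamma> u"
  shows "pd_inner V w n C Sl Su \<gamma> u = ereal (relax_energy V w n C Sl Su \<gamma> u)"
proof -
  define g where "g = real_of_ereal \<gamma>"
  define A where "A = (\<Sum>i\<in>{1..n}. \<Sum>x\<in>V. C i x * u i x)"
  define B where "B = (\<Sum>i\<in>{1..n}. TV_w V w (u i))"
  define P where "P = (if 0 < \<gamma> \<and> \<gamma> < \<infinity> then (\<Sum>i\<in>{1..n}. P_pen g Sl Su i (unorm V (u i))) else 0)"
  have E: "relax_energy V w n C Sl Su \<gamma> u = A + B + P"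
    by (simp add: relax_energy_def A_def B_def P_def g_def)
  have sum1: "(\<Sum>i\<in>{1..n}. u i x) = 1" if "x \<in> V" for x using ok that by (simp add: okU_def)
  have unn: "0 \<le> u i x" if "i \<in> {1..n}" "x \<in> V" for i x using ok that by (simp add: okU_def)
  have T1: "(\<Sum>x\<in>V. ps x * (1 - (\<Sum>i\<in>{1..n}. u i x))) = 0" for ps :: "'v \<Rightarrow> real"
    using sum1 by (intro sum.neutral ballI) auto
  have TV: "TV_w V w (u i) = (1/2) * (\<Sum>x\<in>V. \<Sum>y\<in>V. w x y * \<bar>u i x - u i y\<bar>)" for i
    unfolding TV_w_def by (simp add: abs_minus_commute)
  have UB: "Gobj V w n Sl Su u ps p q r1 r2 \<le> A + B + P" if db: "dual_box V w n C \<gamma> p q r1 r2" for ps p q r1 r2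
  proof -
    have T2: "(\<Sum>i\<in>{1..n}. \<Sum>x\<in>V. u i x * p i x) \<le> A"
      unfolding A_def
    proof (intro sum_mono)
      fix i x assume ix: "i \<in> {1..n}" "x \<in> V"
      then have "p i x \<le> C i x" using db by (simp add: dual_box_def)
      then have "u i x * p i x \<le> u i x * C i x" using unn[OF ix] by (rule mult_left_mono)
      then show "u i x * p i x \<le> C i x * u i x" by (simp add: mult.commute)
    qed
    have T3: "(\<Sum>i\<in>{1..n}. (1/2) * (\<Sum>x\<in>V. \<Sum>y\<in>V. w x y * q i x y * (u i x - u i y))) \<le> B"
      unfolding B_def TV
    proof (intro sum_mono mult_left_mono)
      fix i x y assume i: "i \<in> {1..n}" and x: "x \<in> V" and y: "y \<in> V"
      show "w x y * q i x y * (u i x - u i y) \<le> w x y * \<bar>u i x - u i y\<bar>"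
      proof (cases "w x y > 0")
        case True
        then have "\<bar>q i x y\<bar> \<le> 1" using db i x y by (auto simp: dual_box_def)
        have "q i x y * (u i x - u i y) \<le> \<bar>q i x y * (u i x - u i y)\<bar>" by (rule abs_ge_self)
        also have "\<dots> = \<bar>q i x y\<bar> * \<bar>u i x - u i y\<bar>" by (rule abs_mult)
        also have "\<dots> \<le> 1 * \<bar>u i x - u i y\<bar>" using \<open>\<bar>q i x y\<bar> \<le> 1\<close> by (rule mult_right_mono) simp
        finally have "q i x y * (u i x - u i y) \<le> \<bar>u i x - u i y\<bar>" by simp
        then show ?thesis using wpos[of x y] by (simp add: mult.assoc mult_left_mono)
      next
        case False
        then have "w x y = 0" using wpos[of x y] by simp
        then show ?thesis by simp
      qed
    qed simp
    have r: "0 \<le> r1 i" "0 \<le> r2 i" "ereal (r1 i) \<le> \<gamma>" "ereal (r2 i) \<le> \<gamma>" if "i \<in> {1..n}" for i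
      using db that by (auto simp: dual_box_def)
    have T4: "(\<Sum>i\<in>{1..n}. r1 i * (real (Sl i) - unorm V (u i)) + r2 i * (unorm V (u i) - real (Su i))) \<le> P"
    proof (cases "\<gamma> = \<infinity>")
      case True
      have "(\<Sum>i\<in>{1..n}. r1 i * (real (Sl i) - unorm V (u i)) + r2 i * (unorm V (u i) - real (Su i))) \<le> (\<Sum>i\<in>{1..n}. 0)"
      proof (intro sum_mono)
        fix i assume i: "i \<in> {1..n}"
        then have "real (Sl i) \<le> unorm V (u i)" "unorm V (u i) \<le> real (Su i)" using ok True by (auto simp: okU_def)
        then have "r1 i * (real (Sl i) - unorm V (u i)) \<le> 0" "r2 i * (unorm V (u i) - real (Su i)) \<le> 0"
          using r[OF i] by (auto intro: mult_nonneg_nonpos)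
        then show "r1 i * (real (Sl i) - unorm V (u i)) + r2 i * (unorm V (u i) - real (Su i)) \<le> 0" by simp
      qed
      then show ?thesis using True by (simp add: P_def)
    next
      case False
      have rg: "r1 i \<le> g" "r2 i \<le> g" if "i \<in> {1..n}" for i
        using r[OF that] False g0 by (auto simp: g_def ereal_le_gamma)
      show ?thesis
      proof (cases "\<gamma> = 0")
        case True
        then have "g = 0" by (simp add: g_def)
        then have "r1 i = 0" "r2 i = 0" if "i \<in> {1..n}" for i using rg[OF that] r[OF that] by auto
        then show ?thesis using True by (simp add: P_def)
      next
        case False2: False
        then have "0 < \<gamma> \<and> \<gamma> < \<infinity>" using g0 False by (simp add: order_less_le less_top)
        then have P: "P = (\<Sum>i\<in>{1..n}. P_pen g Sl Su i (unorm V (u i)))" by (simp add: P_def)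
        show ?thesis unfolding P
          by (intro sum_mono pen_bound) (use r rg SlSu in auto)
      qed
    qed
    have "Gobj V w n Sl Su u ps p q r1 r2 = 0 + (\<Sum>i\<in>{1..n}. \<Sum>x\<in>V. u i x * p i x)
     + (\<Sum>i\<in>{1..n}. (1/2) * (\<Sum>x\<in>V. \<Sum>y\<in>V. w x y * q i x y * (u i x - u i y)))
     + (\<Sum>i\<in>{1..n}. r1 i * (real (Sl i) - unorm V (u i)) + r2 i * (unorm V (u i) - real (Su i)))"
      using Gobj_rearr[OF finV sym] T1 by simp
    then show ?thesis using T2 T3 T4 by linarith
  qed
  define r1 where "r1 i = (if 0 < \<gamma> \<and> \<gamma> < \<infinity> \<and> unorm V (u i) < real (Sl i) then g else 0)" for i
  define r2 where "r2 i = (if 0 < \<gamma> \<and> \<gamma> < \<infinity> \<and> unorm V (u i) > real (Su i) then g else 0)" for i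
  define q where "q i x y = sgn (u i x - u i y)" for i x y
  have db: "dual_box V w n C \<gamma> C q r1 r2"
  proof -
    have "ereal g = \<gamma>" if "0 < \<gamma>" "\<gamma> < \<infinity>" using that by (cases \<gamma>) (auto simp: g_def)
    moreover have "0 \<le> g" using g0 by (cases \<gamma>) (auto simp: g_def)
    moreover have "\<bar>sgn (d::real)\<bar> \<le> 1" for d by (simp add: sgn_if)
    ultimately show ?thesis using g0 by (auto simp: dual_box_def r1_def r2_def q_def zero_ereal_def[symmetric])
  qed
  have G: "Gobj V w n Sl Su u (\<lambda>x. 0) C q r1 r2 = A + B + P"
  proof -
    have T2: "(\<Sum>i\<in>{1..n}. \<Sum>x\<in>V. u i x * C i x) = A" by (simp add: A_def mult.commute)
    have T3: "(\<Sum>i\<in>{1..n}. (1/2) * (\<Sum>x\<in>V. \<Sum>y\<in>V. w x y * q i x y * (u i x - u i y))) = B"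
      unfolding B_def TV q_def by (simp add: mult.assoc sgn_mult_self)
    have T4: "(\<Sum>i\<in>{1..n}. r1 i * (real (Sl i) - unorm V (u i)) + r2 i * (unorm V (u i) - real (Su i))) = P"
    proof (cases "0 < \<gamma> \<and> \<gamma> < \<infinity>")
      case True
      have "r1 i * (real (Sl i) - unorm V (u i)) + r2 i * (unorm V (u i) - real (Su i)) = P_pen g Sl Su i (unorm V (u i))"
        if "i \<in> {1..n}" for i
        using SlSu[OF that] True by (auto simp: r1_def r2_def P_pen_def)
      then show ?thesis using True by (simp add: P_def)
    next
      case False
      then have "r1 i = 0 \<and> r2 i = 0" for i unfolding r1_def r2_def by auto
      moreover have "P = 0" unfolding P_def by (rule if_not_P[OF False])
      ultimately show ?thesis by simp
    qed
    have "Gobj V w n Sl Su u (\<lambda>x. 0) C q r1 r2 = (\<Sum>x\<in>V. 0 * (1 - (\<Sum>i\<in>{1..n}. u i x)))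
     + (\<Sum>i\<in>{1..n}. \<Sum>x\<in>V. u i x * C i x)
     + (\<Sum>i\<in>{1..n}. (1/2) * (\<Sum>x\<in>V. \<Sum>y\<in>V. w x y * q i x y * (u i x - u i y)))
     + (\<Sum>i\<in>{1..n}. r1 i * (real (Sl i) - unorm V (u i)) + r2 i * (unorm V (u i) - real (Su i)))"
      by (rule Gobj_rearr[OF finV sym])
    then show ?thesis using T2 T3 T4 by simp
  qed
  have "pd_inner V w n C Sl Su \<gamma> u = ereal (A + B + P)"
    unfolding pd_inner_Gobj
  proof (rule antisym)
    show "Sup {ereal (Gobj V w n Sl Su u ps p q r1 r2) | ps p q r1 r2. dual_box V w n C \<gamma> p q r1 r2} \<le> ereal (A + B + P)"
      using UB by (intro Sup_least) auto
    have "ereal (Gobj V w n Sl Su u (\<lambda>x. 0) C q r1 r2) \<in> {ereal (Gobj V w n Sl Su u ps p q r1 r2) | ps p q r1 r2. dual_box V w n C \<gamma> p q r1 r2}"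
      using db by (intro CollectI exI[of _ "\<lambda>x. 0"] exI[of _ C] exI[of _ q] exI[of _ r1] exI[of _ r2]) simp
    then show "ereal (A + B + P) \<le> Sup {ereal (Gobj V w n Sl Su u ps p q r1 r2) | ps p q r1 r2. dual_box V w n C \<gamma> p q r1 r2}"
      unfolding G[symmetric] by (rule Sup_upper)
  qed
  then show ?thesis using E by simp
qed

lemma Gobj_q0:
  fixes V :: "'v set" and u p :: "nat \<Rightarrow> 'v \<Rightarrow> real" and ps :: "'v \<Rightarrow> real" and r1 r2 :: "nat \<Rightarrow> real"
  assumes "finite V" "\<And>x y. w x y = w y x"
  shows "Gobj V w n Sl Su u ps p (\<lambda>i x y. 0) r1 r2 = (\<Sum>x\<in>V. ps x * (1 - (\<Sum>i\<in>{1..n}. u i x)))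
     + (\<Sum>i\<in>{1..n}. \<Sum>x\<in>V. u i x * p i x)
     + (\<Sum>i\<in>{1..n}. r1 i * (real (Sl i) - unorm V (u i)) + r2 i * (unorm V (u i) - real (Su i)))"
proof -
  have "Gobj V w n Sl Su u ps p (\<lambda>i x y. 0) r1 r2 = (\<Sum>x\<in>V. ps x * (1 - (\<Sum>i\<in>{1..n}. u i x)))
     + (\<Sum>i\<in>{1..n}. \<Sum>x\<in>V. u i x * p i x)
     + (\<Sum>i\<in>{1..n}. (1/2) * (\<Sum>x\<in>V. \<Sum>y\<in>V. w x y * 0 * (u i x - u i y)))
     + (\<Sum>i\<in>{1..n}. r1 i * (real (Sl i) - unorm V (u i)) + r2 i * (unorm V (u i) - real (Su i)))"
    by (rule Gobj_rearr[OF assms])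
  then show ?thesis by simp
qed

lemma pd_inner_notok:
  fixes V :: "'v set" and u :: "nat \<Rightarrow> 'v \<Rightarrow> real"
  assumes finV: "finite V" and sym: "\<And>x y. w x y = w y x" and g0: "0 \<le> \<gamma>" and nok: "\<not> okU V n Sl Su \<gamma> u"
  shows "pd_inner V w n C Sl Su \<gamma> u = \<infinity>"
proof (rule pd_inner_top)
  fix M :: real
  define p0 where "p0 i x = - \<bar>C i x\<bar>" for i x
  define b0 where "b0 = (\<Sum>i\<in>{1..n}. \<Sum>x\<in>V. u i x * p0 i x)"
  define K where "K = \<bar>M\<bar> + \<bar>b0\<bar>"
  have K: "M \<le> K + b0" "0 \<le> K" by (auto simp: K_def)
  define q0 where "q0 = (\<lambda>(i::nat) (x::'v) (y::'v). 0::real)"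
  have db: "dual_box V w n C \<gamma> p q0 r1 r2" if "\<And>i x. p i x \<le> C i x" "\<And>i. 0 \<le> r1 i" "\<And>i. 0 \<le> r2 i"
     "\<And>i. ereal (r1 i) \<le> \<gamma>" "\<And>i. ereal (r2 i) \<le> \<gamma>" for p r1 r2
    using that by (simp add: dual_box_def q0_def)
  have G: "Gobj V w n Sl Su u ps p q0 r1 r2 = (\<Sum>x\<in>V. ps x * (1 - (\<Sum>i\<in>{1..n}. u i x)))
     + (\<Sum>i\<in>{1..n}. \<Sum>x\<in>V. u i x * p i x)
     + (\<Sum>i\<in>{1..n}. r1 i * (real (Sl i) - unorm V (u i)) + r2 i * (unorm V (u i) - real (Su i)))" for ps p r1 r2
    unfolding q0_def by (rule Gobj_q0[OF finV sym])
  have p0C: "p0 i x \<le> C i x" for i x by (simp add: p0_def)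
  have g0': "ereal 0 \<le> \<gamma>" using g0 by (simp add: zero_ereal_def)
  consider (A) x0 where "x0 \<in> V" "(\<Sum>i\<in>{1..n}. u i x0) \<noteq> 1"
    | (B) i0 x0 where "i0 \<in> {1..n}" "x0 \<in> V" "u i0 x0 < 0"
    | (C) i0 where "\<gamma> = \<infinity>" "i0 \<in> {1..n}" "unorm V (u i0) < real (Sl i0)"
    | (D) i0 where "\<gamma> = \<infinity>" "i0 \<in> {1..n}" "unorm V (u i0) > real (Su i0)"
    using nok unfolding okU_def by (meson not_le)
  then show "\<exists>ps p q r1 r2. dual_box V w n C \<gamma> p q r1 r2 \<and> M \<le> Gobj V w n Sl Su u ps p q r1 r2"
  proof cases
    case A
    define s where "s = 1 - (\<Sum>i\<in>{1..n}. u i x0)"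
    have s: "s \<noteq> 0" using A by (simp add: s_def)
    define ps where "ps x = (if x = x0 then K / \<bar>s\<bar> * sgn s else 0)" for x
    have "(\<Sum>x\<in>V. ps x * (1 - (\<Sum>i\<in>{1..n}. u i x))) = (\<Sum>x\<in>V. if x = x0 then K / \<bar>s\<bar> * sgn s * s else 0)"
      by (rule sum.cong) (auto simp: ps_def s_def)
    also have "\<dots> = K / \<bar>s\<bar> * sgn s * s" using A(1) finV by simp
    also have "\<dots> = K" using s by (simp add: mult.assoc sgn_mult_self)
    finally have "Gobj V w n Sl Su u ps p0 q0 (\<lambda>i. 0) (\<lambda>i. 0) = K + b0" by (simp add: G b0_def)
    moreover have "dual_box V w n C \<gamma> p0 q0 (\<lambda>i. 0) (\<lambda>i. 0)" using p0C g0' by (intro db) auto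
    ultimately show ?thesis using K by metis
  next
    case B
    define T where "T = K / (- u i0 x0)"
    have T0: "0 \<le> T" unfolding T_def using B(3) K(2) by (intro divide_nonneg_pos) auto
    have T: "0 \<le> T" "u i0 x0 * T = - K" using B(3) T0 by (auto simp: T_def)
    define p where "p i x = p0 i x - (if i = i0 \<and> x = x0 then T else 0)" for i x
    have inner: "(\<Sum>x\<in>V. u i x * (if i = i0 \<and> x = x0 then T else 0)) = (if i = i0 then u i0 x0 * T else 0)" for i
    proof (cases "i = i0")
      case True
      have "(\<Sum>x\<in>V. u i x * (if i = i0 \<and> x = x0 then T else 0)) = (\<Sum>x\<in>V. if x = x0 then u i0 x0 * T else 0)"
        using True by (intro sum.cong) auto
      then show ?thesis using B(2) finV True by simp
    qed simp
    have "(\<Sum>i\<in>{1..n}. \<Sum>x\<in>V. u i x * p i x) = b0 - (\<Sum>i\<in>{1..n}. \<Sum>x\<in>V. u i x * (if i = i0 \<and> x = x0 then T else 0))"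
      by (simp add: p_def b0_def right_diff_distrib sum_subtractf)
    also have "\<dots> = b0 - u i0 x0 * T" using B(1) by (simp add: inner)
    finally have "Gobj V w n Sl Su u (\<lambda>x. 0) p q0 (\<lambda>i. 0) (\<lambda>i. 0) = K + b0" using T by (simp add: G)
    moreover have "dual_box V w n C \<gamma> p q0 (\<lambda>i. 0) (\<lambda>i. 0)" using p0C g0' T(1)
      by (intro db) (auto simp: p_def intro: order_trans[OF _ p0C])
    ultimately show ?thesis using K by metis
  next
    case C
    define T where "T = K / (real (Sl i0) - unorm V (u i0))"
    have T: "0 \<le> T" "T * (real (Sl i0) - unorm V (u i0)) = K" using C(3) K(2) by (auto simp: T_def)
    define r1 where "r1 i = (if i = i0 then T else 0)" for i
    have "(\<Sum>i\<in>{1..n}. r1 i * (real (Sl i) - unorm V (u i)) + 0 * (unorm V (u i) - real (Su i))) = T * (real (Sl i0) - unorm V (u i0))"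
    proof -
      have "(\<Sum>i\<in>{1..n}. r1 i * (real (Sl i) - unorm V (u i)) + 0 * (unorm V (u i) - real (Su i)))
        = (\<Sum>i\<in>{1..n}. if i = i0 then T * (real (Sl i0) - unorm V (u i0)) else 0)"
        by (rule sum.cong) (auto simp: r1_def)
      then show ?thesis using C(2) by simp
    qed
    then have "Gobj V w n Sl Su u (\<lambda>x. 0) p0 q0 r1 (\<lambda>i. 0) = K + b0" using T by (simp add: G b0_def)
    moreover have "dual_box V w n C \<gamma> p0 q0 r1 (\<lambda>i. 0)" using p0C g0' T(1) C(1)
      by (intro db) (auto simp: r1_def)
    ultimately show ?thesis using K by metis
  next
    case D
    define T where "T = K / (unorm V (u i0) - real (Su i0))"
    have T: "0 \<le> T" "T * (unorm V (u i0) - real (Su i0)) = K" using D(3) K(2) by (auto simp: T_def)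
    define r2 where "r2 i = (if i = i0 then T else 0)" for i
    have "(\<Sum>i\<in>{1..n}. 0 * (real (Sl i) - unorm V (u i)) + r2 i * (unorm V (u i) - real (Su i))) = T * (unorm V (u i0) - real (Su i0))"
    proof -
      have "(\<Sum>i\<in>{1..n}. 0 * (real (Sl i) - unorm V (u i)) + r2 i * (unorm V (u i) - real (Su i)))
        = (\<Sum>i\<in>{1..n}. if i = i0 then T * (unorm V (u i0) - real (Su i0)) else 0)"
        by (rule sum.cong) (auto simp: r2_def)
      then show ?thesis using D(2) by simp
    qed
    then have "Gobj V w n Sl Su u (\<lambda>x. 0) p0 q0 (\<lambda>i. 0) r2 = K + b0" using T by (simp add: G b0_def)
    moreover have "dual_box V w n C \<gamma> p0 q0 (\<lambda>i. 0) r2" using p0C g0' T(1) D(1)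
      by (intro db) (auto simp: r2_def)
    ultimately show ?thesis using K by metis
  qed
qed

lemma pd_eq_relax:
  fixes V :: "'v set"
  assumes finV: "finite V" and sym: "\<And>x y. w x y = w y x" and wpos: "\<And>x y. w x y \<ge> 0"
    and SlSu: "\<And>i. i \<in> {1..n} \<Longrightarrow> Sl i \<le> Su i" and g0: "0 \<le> \<gamma>"
  shows "pd_inner V w n C Sl Su \<gamma> u = (if u \<in> relax_feasible V n Sl Su \<gamma> then ereal (relax_energy V w n C Sl Su \<gamma> u) else \<infinity>)"
    and "pd_value V w n C Sl Su \<gamma> = relax_value V w n C Sl Su \<gamma>"
proof -
  show pi: "pd_inner V w n C Sl Su \<gamma> u = (if u \<in> relax_feasible V n Sl Su \<gamma> then ereal (relax_energy V w n C Sl Su \<gamma> u) else \<infinity>)" for u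
    using pd_inner_ok[OF assms] pd_inner_notok[OF finV sym g0] by (auto simp: okU_feasible)
  show "pd_value V w n C Sl Su \<gamma> = relax_value V w n C Sl Su \<gamma>"
    unfolding pd_value_def relax_value_def
  proof (rule antisym)
    show "(INF u. pd_inner V w n C Sl Su \<gamma> u) \<le> (INF u\<in>relax_feasible V n Sl Su \<gamma>. ereal (relax_energy V w n C Sl Su \<gamma> u))"
    proof (rule INF_greatest)
      fix u assume "u \<in> relax_feasible V n Sl Su \<gamma>"
      then have "pd_inner V w n C Sl Su \<gamma> u = ereal (relax_energy V w n C Sl Su \<gamma> u)" using pi by simp
      then show "(INF u. pd_inner V w n C Sl Su \<gamma> u) \<le> ereal (relax_energy V w n C Sl Su \<gamma> u)"
        by (metis INF_lower UNIV_I)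
    qed
    show "(INF u\<in>relax_feasible V n Sl Su \<gamma>. ereal (relax_energy V w n C Sl Su \<gamma> u)) \<le> (INF u. pd_inner V w n C Sl Su \<gamma> u)"
    proof (rule INF_greatest)
      fix u
      show "(INF u\<in>relax_feasible V n Sl Su \<gamma>. ereal (relax_energy V w n C Sl Su \<gamma> u)) \<le> pd_inner V w n C Sl Su \<gamma> u"
      proof (cases "u \<in> relax_feasible V n Sl Su \<gamma>")
        case True
        then have "(INF u\<in>relax_feasible V n Sl Su \<gamma>. ereal (relax_energy V w n C Sl Su \<gamma> u)) \<le> ereal (relax_energy V w n C Sl Su \<gamma> u)"
          by (rule INF_lower)
        then show ?thesis using pi True by simp
      next
        case False then show ?thesis using pi by simp
      qed
    qed
  qed
qed



lemma cont_coord2 [continuous_intros]: "continuous_on S (\<lambda>u::nat\<Rightarrow>'v\<Rightarrow>real. u i x)"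
proof -
  have "continuous_on UNIV (\<lambda>u::nat\<Rightarrow>'v\<Rightarrow>real. u i)" by (rule continuous_on_product_coordinates)
  then have "continuous_on UNIV (\<lambda>u::nat\<Rightarrow>'v\<Rightarrow>real. u i x)" by (rule continuous_on_product_then_coordinatewise)
  then show ?thesis by (rule continuous_on_subset) simp
qed

lemma compact_PiE_UNIV:
  fixes A :: "'i \<Rightarrow> 'b::topological_space set"
  assumes "\<And>i. compact (A i)"
  shows "compact (PiE UNIV A)"
proof -
  have "compactin (product_topology (\<lambda>i. euclidean) UNIV) (PiE UNIV A)"
    using assms by (simp add: compactin_PiE)
  then show ?thesis by (simp add: euclidean_product_topology)
qed

lemma P_pen_max: "Sl i \<le> Su i \<Longrightarrow> P_pen g Sl Su i t = g * max 0 (t - real (Su i)) + g * max 0 (real (Sl i) - t)"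
  by (auto simp: P_pen_def max_def)

lemma energy_cong:
  assumes "\<And>i x. i \<in> {1..n} \<Longrightarrow> x \<in> V \<Longrightarrow> u i x = v i x"
  shows "relax_energy V w n C Sl Su \<gamma> u = relax_energy V w n C Sl Su \<gamma> v"
proof -
  have un: "unorm V (u i) = unorm V (v i)" if "i \<in> {1..n}" for i
    unfolding unorm_def using assms that by (intro sum.cong) auto
  have tv: "TV_w V w (u i) = TV_w V w (v i)" if "i \<in> {1..n}" for i
    unfolding TV_w_def using assms that by (intro arg_cong[where f="\<lambda>s. (1/2) * s"] sum.cong refl) auto
  have c: "(\<Sum>i\<in>{1..n}. \<Sum>x\<in>V. C i x * u i x) = (\<Sum>i\<in>{1..n}. \<Sum>x\<in>V. C i x * v i x)"
    using assms by (intro sum.cong refl) auto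
  have t: "(\<Sum>i\<in>{1..n}. TV_w V w (u i)) = (\<Sum>i\<in>{1..n}. TV_w V w (v i))"
    using tv by (intro sum.cong refl) auto
  have p: "(\<Sum>i\<in>{1..n}. P_pen g Sl Su i (unorm V (u i))) = (\<Sum>i\<in>{1..n}. P_pen g Sl Su i (unorm V (v i)))" for g
    using un by (intro sum.cong refl) auto
  show ?thesis unfolding relax_energy_def c t p ..
qed

lemma exists_min:
  fixes V :: "'v set"
  assumes finV: "finite V" and SlSu: "\<And>i. i \<in> {1..n} \<Longrightarrow> Sl i \<le> Su i"
    and sl: "(\<Sum>i\<in>{1..n}. Sl i) \<le> card V" and su: "card V \<le> (\<Sum>i\<in>{1..n}. Su i)"
  shows "\<exists>u\<in>relax_feasible V n Sl Su \<gamma>. \<forall>v\<in>relax_feasible V n Sl Su \<gamma>.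
           relax_energy V w n C Sl Su \<gamma> u \<le> relax_energy V w n C Sl Su \<gamma> v"
proof -
  define I where "I = {1..n}"
  define S where "S i x = (if i \<in> I \<and> x \<in> V then {0..1} else {0::real})" for i x
  define K0 where "K0 = PiE UNIV (\<lambda>i. PiE UNIV (S i))"
  have K0_iff: "u \<in> K0 \<longleftrightarrow> (\<forall>i x. u i x \<in> S i x)" for u by (simp add: K0_def PiE_iff)
  have cK0: "compact K0" unfolding K0_def
    by (intro compact_PiE_UNIV) (simp add: S_def)
  define Cl1 where "Cl1 = (\<Inter>x\<in>V. {u::nat\<Rightarrow>'v\<Rightarrow>real. (\<Sum>i\<in>I. u i x) = 1})"
  define Cl2 where "Cl2 = (if \<gamma> = \<infinity> then (\<Inter>i\<in>I. {u::nat\<Rightarrow>'v\<Rightarrow>real. real (Sl i) \<le> (\<Sum>x\<in>V. u i x)} \<inter> {u. (\<Sum>x\<in>V. u i x) \<le> real (Su i)}) else UNIV)"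
  define Cl where "Cl = Cl1 \<inter> Cl2"
  have cl2: "closed Cl2" unfolding Cl2_def
    by (cases "\<gamma> = \<infinity>") (auto intro!: closed_Int closed_INT closed_Collect_le continuous_intros)
  have cCl: "closed Cl" unfolding Cl_def Cl1_def
    by (intro closed_Int closed_INT ballI closed_Collect_eq continuous_intros cl2)
  define F0 where "F0 = K0 \<inter> Cl"
  have cF0: "compact F0" unfolding F0_def using cK0 cCl by (rule compact_Int_closed)
  have F0_feas: "u \<in> relax_feasible V n Sl Su \<gamma>" if "u \<in> F0" for u
  proof -
    from that have uK: "u \<in> K0" and uC1: "u \<in> Cl1" and uC2: "u \<in> Cl2" by (auto simp: F0_def Cl_def)
    have a: "\<forall>x\<in>V. (\<Sum>i\<in>I. u i x) = 1" using uC1 by (simp add: Cl1_def)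
    have b: "\<forall>i\<in>I. \<forall>x\<in>V. 0 \<le> u i x"
    proof (intro ballI)
      fix i x assume "i \<in> I" "x \<in> V"
      then have "u i x \<in> {0..1}" using uK unfolding K0_iff S_def by (metis (full_types))
      then show "0 \<le> u i x" by simp
    qed
    have c: "\<gamma> = \<infinity> \<longrightarrow> (\<forall>i\<in>I. real (Sl i) \<le> unorm V (u i) \<and> unorm V (u i) \<le> real (Su i))"
      using uC2 by (cases "\<gamma> = \<infinity>") (simp_all add: Cl2_def unorm_def)
    have "okU V n Sl Su \<gamma> u" unfolding okU_def I_def[symmetric] using a b c by blast
    then show ?thesis by (simp add: okU_feasible)
  qed
  define tr where "tr v = (\<lambda>i x. if i \<in> I \<and> x \<in> V then v i x else (0::real))" for v :: "nat \<Rightarrow> 'v \<Rightarrow> real"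
  have tr_F0: "tr v \<in> F0" if "v \<in> relax_feasible V n Sl Su \<gamma>" for v
  proof -
    have ok: "okU V n Sl Su \<gamma> v" using that by (simp add: okU_feasible)
    then have ok': "\<forall>x\<in>V. (\<Sum>i\<in>I. v i x) = 1" "\<forall>i\<in>I. \<forall>x\<in>V. 0 \<le> v i x"
       "\<gamma> = \<infinity> \<longrightarrow> (\<forall>i\<in>I. real (Sl i) \<le> unorm V (v i) \<and> unorm V (v i) \<le> real (Su i))"
      unfolding okU_def I_def[symmetric] by blast+
    have b: "v i x \<le> 1" if "i \<in> I" "x \<in> V" for i x
      using \<open>v \<in> relax_feasible V n Sl Su \<gamma>\<close> that unfolding relax_feasible_def Bprime_def I_def by blast
    have s1: "(\<Sum>i\<in>I. tr v i x) = (\<Sum>i\<in>I. v i x)" if "x \<in> V" for x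
      using that by (intro sum.cong) (auto simp: tr_def)
    have s2: "(\<Sum>x\<in>V. tr v i x) = unorm V (v i)" if "i \<in> I" for i
      using that unfolding unorm_def by (intro sum.cong) (auto simp: tr_def)
    have "tr v \<in> K0" unfolding K0_iff
    proof (intro allI)
      fix i x show "tr v i x \<in> S i x"
        using b ok'(2) by (cases "i \<in> I \<and> x \<in> V") (auto simp: tr_def S_def)
    qed
    moreover have "tr v \<in> Cl1" using s1 ok'(1) by (simp add: Cl1_def)
    moreover have "tr v \<in> Cl2" using s2 ok'(3) by (cases "\<gamma> = \<infinity>") (simp_all add: Cl2_def)
    ultimately show ?thesis by (simp add: F0_def Cl_def)
  qed
  have tr_E: "relax_energy V w n C Sl Su \<gamma> (tr v) = relax_energy V w n C Sl Su \<gamma> v" for v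
    by (rule energy_cong) (simp add: tr_def I_def)
  define g where "g = real_of_ereal \<gamma>"
  define cg where "cg = (0 < \<gamma> \<and> \<gamma> < \<infinity>)"
  define E2 where "E2 u = (\<Sum>i\<in>I. \<Sum>x\<in>V. C i x * u i x) + (\<Sum>i\<in>I. (1/2) * (\<Sum>x\<in>V. \<Sum>y\<in>V. w x y * \<bar>u i y - u i x\<bar>))
     + (if cg then (\<Sum>i\<in>I. g * max 0 ((\<Sum>x\<in>V. u i x) - real (Su i)) + g * max 0 (real (Sl i) - (\<Sum>x\<in>V. u i x))) else 0)"
    for u :: "nat \<Rightarrow> 'v \<Rightarrow> real"
  have E2: "relax_energy V w n C Sl Su \<gamma> u = E2 u" for u
  proof -
    have "(\<Sum>i\<in>I. P_pen g Sl Su i (unorm V (u i))) = (\<Sum>i\<in>I. g * max 0 ((\<Sum>x\<in>V. u i x) - real (Su i)) + g * max 0 (real (Sl i) - (\<Sum>x\<in>V. u i x)))"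
      using SlSu by (intro sum.cong refl) (simp add: P_pen_max unorm_def I_def)
    then show ?thesis unfolding relax_energy_def E2_def TV_w_def I_def g_def cg_def by simp
  qed
  have cE2: "continuous_on F0 E2"
    unfolding E2_def by (cases cg) (simp_all add: continuous_intros)
  define N where "N = real (card V)"
  define Ls where "Ls = real (\<Sum>i\<in>I. Sl i)"
  define Us where "Us = real (\<Sum>i\<in>I. Su i)"
  have LN: "Ls \<le> N" "N \<le> Us" using sl su unfolding Ls_def Us_def N_def I_def of_nat_le_iff by simp_all
  define lam where "lam = (if Us = Ls then 0 else (N - Ls) / (Us - Ls))"
  have lam0: "0 \<le> lam \<and> lam \<le> 1 \<and> Ls + lam * (Us - Ls) = N"
  proof (cases "Us = Ls")
    case True then show ?thesis using LN by (auto simp: lam_def)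
  next
    case False
    then have "Us - Ls > 0" using LN by simp
    then show ?thesis using LN False by (auto simp: lam_def divide_simps)
  qed
  then have lam: "0 \<le> lam" "lam \<le> 1" "Ls + lam * (Us - Ls) = N" by auto
  define t where "t i = real (Sl i) + lam * (real (Su i) - real (Sl i))" for i
  have tsum: "(\<Sum>i\<in>I. t i) = N"
  proof -
    have "(\<Sum>i\<in>I. t i) = (\<Sum>i\<in>I. real (Sl i)) + lam * ((\<Sum>i\<in>I. real (Su i)) - (\<Sum>i\<in>I. real (Sl i)))"
      by (simp add: t_def sum.distrib sum_distrib_left[symmetric] sum_subtractf[symmetric])
    then show ?thesis using lam(3) by (simp add: Ls_def Us_def)
  qed
  have tb: "real (Sl i) \<le> t i" "t i \<le> real (Su i)" if "i \<in> I" for i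
  proof -
    have d: "0 \<le> real (Su i) - real (Sl i)" using SlSu that by (simp add: I_def)
    have "lam * (real (Su i) - real (Sl i)) \<le> 1 * (real (Su i) - real (Sl i))" using lam(2) d by (rule mult_right_mono)
    moreover have "0 \<le> lam * (real (Su i) - real (Sl i))" using lam(1) d by simp
    ultimately show "real (Sl i) \<le> t i" "t i \<le> real (Su i)" by (auto simp: t_def)
  qed
  have t0: "0 \<le> t i" if "i \<in> I" for i using tb(1)[OF that] by (meson of_nat_0_le_iff order_trans)
  have tN: "t i \<le> N" if "i \<in> I" for i
  proof -
    have "t i \<le> (\<Sum>j\<in>I. t j)" using that t0 by (intro member_le_sum) (auto simp: I_def)
    then show ?thesis using tsum by simp
  qed
  define u0 where "u0 i x = (if i \<in> I \<and> x \<in> V then t i / N else 0)" for i x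
  have ne: "F0 \<noteq> {}"
  proof -
    have "u0 \<in> K0" unfolding K0_iff
    proof (intro allI)
      fix i x show "u0 i x \<in> S i x"
      proof (cases "i \<in> I \<and> x \<in> V")
        case True
        then have "N > 0" using finV by (auto simp: N_def card_gt_0_iff)
        then show ?thesis using True t0 tN by (auto simp: u0_def S_def)
      qed (auto simp: u0_def S_def)
    qed
    moreover have "u0 \<in> Cl1" unfolding Cl1_def
    proof (intro InterI, clarsimp)
      fix x assume x: "x \<in> V"
      then have "N > 0" using finV by (auto simp: N_def card_gt_0_iff)
      have "(\<Sum>i\<in>I. u0 i x) = (\<Sum>i\<in>I. t i / N)" using x by (intro sum.cong) (auto simp: u0_def)
      also have "\<dots> = 1" using tsum \<open>N > 0\<close> by (simp add: sum_divide_distrib[symmetric])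
      finally show "(\<Sum>i\<in>I. u0 i x) = 1" .
    qed
    moreover have "u0 \<in> Cl2"
    proof (cases "\<gamma> = \<infinity>")
      case True
      have "real (Sl i) \<le> (\<Sum>x\<in>V. u0 i x) \<and> (\<Sum>x\<in>V. u0 i x) \<le> real (Su i)" if i: "i \<in> I" for i
      proof (cases "V = {}")
        case True
        have "real (Sl i) \<le> Ls" unfolding Ls_def of_nat_le_iff
          using i finV by (intro member_le_sum) (auto simp: I_def)
        then have "real (Sl i) \<le> 0" using LN True by (simp add: N_def)
        then show ?thesis using True by simp
      next
        case False
        then have "N > 0" using finV by (auto simp: N_def card_gt_0_iff)
        have "(\<Sum>x\<in>V. u0 i x) = (\<Sum>x\<in>V. t i / N)" using i by (intro sum.cong) (auto simp: u0_def)
        also have "\<dots> = t i" using \<open>N > 0\<close> by (simp add: N_def)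
        finally show ?thesis using tb[OF i] by simp
      qed
      then show ?thesis using True by (simp add: Cl2_def)
    qed (simp add: Cl2_def)
    ultimately show ?thesis by (auto simp: F0_def Cl_def)
  qed
  obtain u where u: "u \<in> F0" "\<And>y. y \<in> F0 \<Longrightarrow> E2 u \<le> E2 y"
    using continuous_attains_inf[OF cF0 ne cE2] by blast
  show ?thesis
  proof (intro bexI[of _ u] ballI)
    show "u \<in> relax_feasible V n Sl Su \<gamma>" using u(1) by (rule F0_feas)
  next
    fix v assume v: "v \<in> relax_feasible V n Sl Su \<gamma>"
    have "relax_energy V w n C Sl Su \<gamma> u = E2 u" by (rule E2)
    also have "\<dots> \<le> E2 (tr v)" using u(2) tr_F0[OF v] by blast
    also have "\<dots> = relax_energy V w n C Sl Su \<gamma> v" using E2[of "tr v"] tr_E[of v] by simp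
    finally show "relax_energy V w n C Sl Su \<gamma> u \<le> relax_energy V w n C Sl Su \<gamma> v" .
  qed
qed


theorem theorem4:
  fixes V :: "'v set" and w :: "'v \<Rightarrow> 'v \<Rightarrow> real" and n :: nat
    and C :: "nat \<Rightarrow> 'v \<Rightarrow> real" and Sl Su :: "nat \<Rightarrow> nat" and \<gamma> :: ereal
  assumes "finite V"
    and "\<And>x y. w x y = w y x"
    and "\<And>x y. w x y \<ge> 0"
    and "n \<ge> 2"
    and "\<And>i. i \<in> {1..n} \<Longrightarrow> Sl i \<le> Su i"
    and "(\<Sum>i\<in>{1..n}. Sl i) \<le> card V" and "card V \<le> (\<Sum>i\<in>{1..n}. Su i)"
    and "0 \<le> \<gamma>"
  shows "maxflow_value V w n C Sl Su \<gamma> = pd_value V w n C Sl Su \<gamma>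
       \<and> pd_value V w n C Sl Su \<gamma> = relax_value V w n C Sl Su \<gamma>
       \<and> (\<exists>u. pd_inner V w n C Sl Su \<gamma> u = pd_value V w n C Sl Su \<gamma>)
       \<and> (\<exists>u\<in>relax_feasible V n Sl Su \<gamma>.
             ereal (relax_energy V w n C Sl Su \<gamma> u) = relax_value V w n C Sl Su \<gamma>)"
proof -
  obtain us where us: "us \<in> relax_feasible V n Sl Su \<gamma>"
    "\<forall>v\<in>relax_feasible V n Sl Su \<gamma>. relax_energy V w n C Sl Su \<gamma> us \<le> relax_energy V w n C Sl Su \<gamma> v"
    using exists_min[OF assms(1) assms(5) assms(6) assms(7), where \<gamma>=\<gamma> and w=w and C=C] by blast
  have rv: "relax_value V w n C Sl Su \<gamma> = ereal (relax_energy V w n C Sl Su \<gamma> us)"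
    unfolding relax_value_def
  proof (rule antisym)
    show "(INF u\<in>relax_feasible V n Sl Su \<gamma>. ereal (relax_energy V w n C Sl Su \<gamma> u)) \<le> ereal (relax_energy V w n C Sl Su \<gamma> us)"
      using us(1) by (rule INF_lower)
    show "ereal (relax_energy V w n C Sl Su \<gamma> us) \<le> (INF u\<in>relax_feasible V n Sl Su \<gamma>. ereal (relax_energy V w n C Sl Su \<gamma> u))"
      using us(2) by (intro INF_greatest) simp
  qed
  have pr: "pd_value V w n C Sl Su \<gamma> = relax_value V w n C Sl Su \<gamma>"
    by (rule pd_eq_relax(2)[OF assms(1,2,3,5,8)])
  have pi: "pd_inner V w n C Sl Su \<gamma> us = ereal (relax_energy V w n C Sl Su \<gamma> us)"
    using pd_eq_relax(1)[OF assms(1,2,3,5,8), where C=C and u=us] us(1) by simp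
  have pv: "pd_value V w n C Sl Su \<gamma> = ereal (relax_energy V w n C Sl Su \<gamma> us)" using pr rv by simp
  have "pd_value V w n C Sl Su \<gamma> \<le> maxflow_value V w n C Sl Su \<gamma>"
    by (rule strong_duality[OF assms(1) assms(8) pv])
  moreover have "maxflow_value V w n C Sl Su \<gamma> \<le> pd_value V w n C Sl Su \<gamma>" by (rule weak_duality)
  ultimately have mp: "maxflow_value V w n C Sl Su \<gamma> = pd_value V w n C Sl Su \<gamma>" by simp
  show ?thesis using mp pr pi pv rv us(1) by auto
qed

end
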